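(* For $x,y\in[0,1]$ let $$k(x,y)=\sum_{i\ge1}a_i\phi_i(x)\phi_i(y),\qquad c(x,y)=\sum_{m\ge1}b_m\psi_m(x)\psi_m(y),$$ where $a_i\ge0$, $b_m\ge0$, $\sum_ia_i<\infty$, $\sum_mb_m<\infty$, and $(\phi_i)_i$, $(\psi_m)_m$ are orthonormal bases of $L^2([0,1])$. Let $T$ be the integral operator $Tf=\int_0^1k(\cdot,x)f(x)\,dx$ on $L^2([0,1])$, and let $C$ be the covariance operator of a mean-zero Gaussian process $X$ on $[0,1]$ with covariance function $c$. Define $\theta_{mi}:=\langle\psi_m,\phi_i\rangle$, $\eta_{ij}:=\sum_{m\ge1}b_m\theta_{mi}\theta_{mj}$, $\tau_j:=\sum_ia_i\eta_{ij}^2$, and assume $\sup_j\tau_j<\infty$. Then: (i) the RKHS induced by $k$ is $\mathcal{H}=\{f=\sum_{i\ge1}f_i\phi_i:\sum_if_i^2/a_i<\infty\}$ with inner product $\langle f,g\rangle_{\mathcal{H}}=\sum_ia_i^{-1}f_ig_i$; (ii) $\mathscr{R}\big(T^{1/2}(T^{1/2}CT^{1/2})\big)\subset\tilde{\mathcal{H}}\subset\mathcal{H}$, where $\tilde{\mathcal{H}}=\{f=\sum_if_i\phi_i:\sum_i f_i^2/(a_i\tau_i)<\infty\}$ is the RKHS induced by the kernel $\tilde k(x,y)=\sum_{i\ge1}a_i\tau_i\phi_i(x)\phi_i(y)$, with inner product $\langle f,g\rangle_{\tilde{\mathcal{H}}}=\sum_{i\ge1}f_ig_i(\tau_ia_i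)^{-1}$.
   Context: $\mathscr{R}(A)$ denotes the range of an operator $A$; fractional powers of positive self-adjoint operators are defined by functional calculus. The covariance operator is $C=\mathbb{E}[X\otimes X]$ on $L^2([0,1])$. *)

theory Defs
  imports "HOL-Analysis.Analysis"
begin

definition L2I :: "(real \<Rightarrow> real) set" where
  "L2I = {f. set_borel_measurable lborel {0..1} f \<and>
             set_integrable lborel {0..1} (\<lambda>x. (f x)^2)}"

definition l2_ip :: "(real \<Rightarrow> real) \<Rightarrow> (real \<Rightarrow> real) \<Rightarrow> real" where
  "l2_ip f g = (LINT x:{0..1}|lborel. f x * g x)"

definition l2_eq :: "(real \<Rightarrow> real) \<Rightarrow> (real \<Rightarrow> real) \<Rightarrow> bool" where
  "l2_eq f g \<longleftrightarrow> (AE x in lborel. x \<in> {0..1} \<longrightarrow> f x = g x)"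

definition orthonormal_basis_L2 :: "(nat \<Rightarrow> real \<Rightarrow> real) \<Rightarrow> bool" where
  "orthonormal_basis_L2 \<phi> \<longleftrightarrow>
     (\<forall>i. \<phi> i \<in> L2I) \<and>
     (\<forall>i j. l2_ip (\<phi> i) (\<phi> j) = (if i = j then 1 else 0)) \<and>
     (\<forall>f\<in>L2I. (\<forall>i. l2_ip f (\<phi> i) = 0) \<longrightarrow> l2_eq f (\<lambda>_. 0))"

text \<open>Bounded linear operators on L2([0,1]), represented by maps on representatives
  that respect a.e. equality.\<close>
definition l2_operator :: "((real \<Rightarrow> real) \<Rightarrow> (real \<Rightarrow> real)) \<Rightarrow> bool" where
  "l2_operator A \<longleftrightarrow>
     (\<forall>f\<in>L2I. A f \<in> L2I) \<and>
     (\<forall>f\<in>L2I. \<forall>g\<in>L2I. l2_eq f g \<longrightarrow> l2_eq (A f) (A g)) \<and>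
     (\<forall>f\<in>L2I. \<forall>g\<in>L2I. \<forall>a b.
        l2_eq (A (\<lambda>x. a * f x + b * g x)) (\<lambda>x. a * A f x + b * A g x)) \<and>
     (\<exists>K. \<forall>f\<in>L2I. l2_ip (A f) (A f) \<le> K * l2_ip f f)"

text \<open>S is the (positive self-adjoint) square root A^(1/2) of A; by uniqueness of the
  positive square root this is the operator given by the functional calculus.\<close>
definition l2_sqrt_of :: "((real \<Rightarrow> real) \<Rightarrow> (real \<Rightarrow> real)) \<Rightarrow>
    ((real \<Rightarrow> real) \<Rightarrow> (real \<Rightarrow> real)) \<Rightarrow> bool" where
  "l2_sqrt_of A S \<longleftrightarrow>
     l2_operator S \<and>
     (\<forall>f\<in>L2I. \<forall>g\<in>L2I. l2_ip (S f) g = l2_ip f (S g)) \<and>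
     (\<forall>f\<in>L2I. 0 \<le> l2_ip (S f) f) \<and>
     (\<forall>f\<in>L2I. l2_eq (S (S f)) (A f))"

definition l2_sqrt :: "((real \<Rightarrow> real) \<Rightarrow> (real \<Rightarrow> real)) \<Rightarrow> ((real \<Rightarrow> real) \<Rightarrow> (real \<Rightarrow> real))" where
  "l2_sqrt A = (SOME S. l2_sqrt_of A S)"

text \<open>The range of an operator on L2 is contained in a set H of functions:
  every element of the range has a representative in H.\<close>
definition l2_range_subset :: "((real \<Rightarrow> real) \<Rightarrow> (real \<Rightarrow> real)) \<Rightarrow> (real \<Rightarrow> real) set \<Rightarrow> bool" where
  "l2_range_subset A H \<longleftrightarrow> (\<forall>f\<in>L2I. \<exists>h\<in>H. l2_eq (A f) h)"

definition mercer_kernel :: "(nat \<Rightarrow> real) \<Rightarrow> (nat \<Rightarrow> real \<Rightarrow> real) \<Rightarrow> real \<Rightarrow> real \<Rightarrow> real" where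
  "mercer_kernel w \<phi> = (\<lambda>x y. \<Sum>i. w i * \<phi> i x * \<phi> i y)"

definition integral_op :: "(real \<Rightarrow> real \<Rightarrow> real) \<Rightarrow> (real \<Rightarrow> real) \<Rightarrow> real \<Rightarrow> real" where
  "integral_op K f = (\<lambda>x. LINT y:{0..1}|lborel. K x y * f y)"

text \<open>Covariance operator C = E[X (x) X] of a centred process X on [0,1] with covariance
  function c: (C f)(x) = E[X(x) <X,f>] = int_0^1 c(x,y) f(y) dy.\<close>
definition cov_op :: "(real \<Rightarrow> real \<Rightarrow> real) \<Rightarrow> (real \<Rightarrow> real) \<Rightarrow> real \<Rightarrow> real" where
  "cov_op c = integral_op c"

definition theta :: "(nat \<Rightarrow> real \<Rightarrow> real) \<Rightarrow> (nat \<Rightarrow> real \<Rightarrow> real) \<Rightarrow> nat \<Rightarrow> nat \<Rightarrow> real" where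
  "theta \<psi> \<phi> m i = l2_ip (\<psi> m) (\<phi> i)"

definition eta :: "(nat \<Rightarrow> real) \<Rightarrow> (nat \<Rightarrow> real \<Rightarrow> real) \<Rightarrow> (nat \<Rightarrow> real \<Rightarrow> real) \<Rightarrow> nat \<Rightarrow> nat \<Rightarrow> real" where
  "eta b \<psi> \<phi> i j = (\<Sum>m. b m * theta \<psi> \<phi> m i * theta \<psi> \<phi> m j)"

definition tau :: "(nat \<Rightarrow> real) \<Rightarrow> (nat \<Rightarrow> real) \<Rightarrow> (nat \<Rightarrow> real \<Rightarrow> real) \<Rightarrow> (nat \<Rightarrow> real \<Rightarrow> real) \<Rightarrow> nat \<Rightarrow> real" where
  "tau a b \<psi> \<phi> j = (\<Sum>i. a i * (eta b \<psi> \<phi> i j)^2)"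

text \<open>Functions on X are represented as functions on the reals vanishing outside X.\<close>
definition kernel_section :: "real set \<Rightarrow> (real \<Rightarrow> real \<Rightarrow> real) \<Rightarrow> real \<Rightarrow> real \<Rightarrow> real" where
  "kernel_section X K x = (\<lambda>y. if y \<in> X then K y x else 0)"

definition is_rkhs :: "real set \<Rightarrow> (real \<Rightarrow> real \<Rightarrow> real) \<Rightarrow> (real \<Rightarrow> real) set \<Rightarrow>
    ((real \<Rightarrow> real) \<Rightarrow> (real \<Rightarrow> real) \<Rightarrow> real) \<Rightarrow> bool" where
  "is_rkhs X K H ip \<longleftrightarrow>
     (\<forall>f\<in>H. \<forall>x. x \<notin> X \<longrightarrow> f x = 0) \<and>
     (\<lambda>_. 0) \<in> H \<and>
     (\<forall>f\<in>H. \<forall>g\<in>H. \<forall>a b. (\<lambda>x. a * f x + b * g x) \<in> H) \<and>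
     (\<forall>f\<in>H. \<forall>g\<in>H. ip f g = ip g f) \<and>
     (\<forall>f\<in>H. \<forall>g\<in>H. \<forall>h\<in>H. \<forall>a b.
        ip (\<lambda>x. a * f x + b * g x) h = a * ip f h + b * ip g h) \<and>
     (\<forall>f\<in>H. 0 \<le> ip f f \<and> (ip f f = 0 \<longrightarrow> f = (\<lambda>_. 0))) \<and>
     (\<forall>u. (\<forall>n. u n \<in> H) \<and>
          (\<forall>e>0. \<exists>N. \<forall>m\<ge>N. \<forall>n\<ge>N. ip (\<lambda>x. u m x - u n x) (\<lambda>x. u m x - u n x) < e) \<longrightarrow>
          (\<exists>f\<in>H. (\<lambda>n. ip (\<lambda>x. u n x - f x) (\<lambda>x. u n x - f x)) \<longlonglongrightarrow> 0)) \<and>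
     (\<forall>x\<in>X. kernel_section X K x \<in> H \<and> (\<forall>f\<in>H. ip f (kernel_section X K x) = f x))"

definition coef_space :: "(nat \<Rightarrow> real \<Rightarrow> real) \<Rightarrow> (nat \<Rightarrow> real) \<Rightarrow> (real \<Rightarrow> real) set" where
  "coef_space \<phi> w = {f. \<exists>F. (\<forall>i. w i = 0 \<longrightarrow> F i = 0) \<and>
       summable (\<lambda>i. (F i)^2 / w i) \<and>
       (\<forall>x\<in>{0..1}. (\<lambda>i. F i * \<phi> i x) sums f x) \<and>
       (\<forall>x. x \<notin> {0..1} \<longrightarrow> f x = 0)}"

definition coef_ip :: "(nat \<Rightarrow> real \<Rightarrow> real) \<Rightarrow> (nat \<Rightarrow> real) \<Rightarrow>
    (real \<Rightarrow> real) \<Rightarrow> (real \<Rightarrow> real) \<Rightarrow> real" where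
  "coef_ip \<phi> w f g = (\<Sum>i. l2_ip f (\<phi> i) * l2_ip g (\<phi> i) / w i)"

end

theory Submission
  imports Defs
begin


abbreviation M01 :: "real measure" where "M01 \<equiv> restrict_space lborel {0..1}"

lemma space_M01[simp]: "space M01 = {0..1}" by (simp add: space_restrict_space)

lemma L2I_iff: "f \<in> L2I \<longleftrightarrow> f \<in> borel_measurable M01 \<and> integrable M01 (\<lambda>x. (f x)^2)"
  unfolding L2I_def set_borel_measurable_def
  by (simp add: borel_measurable_restrict_space_iff set_integrable_eq)

lemma l2_ip_eq: "l2_ip f g = (\<integral>x. f x * g x \<partial>M01)"
  unfolding l2_ip_def set_lebesgue_integral_def by (simp add: integral_restrict_space)

lemma l2_eq_iff: "l2_eq f g \<longleftrightarrow> (AE x in M01. f x = g x)"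
  unfolding l2_eq_def by (simp add: AE_restrict_space_iff)

lemma fin_M01: "finite_measure M01"
  by (intro finite_measureI) (simp add: emeasure_restrict_space)



lemma SCS:
  fixes p q :: "nat \<Rightarrow> real"
  assumes "summable (\<lambda>n. (p n)^2)" "summable (\<lambda>n. (q n)^2)"
  shows "summable (\<lambda>n. \<bar>p n * q n\<bar>)"
    and "(\<Sum>n. \<bar>p n * q n\<bar>)^2 \<le> (\<Sum>n. (p n)^2) * (\<Sum>n. (q n)^2)"
proof -
  define A where "A = (\<Sum>n. (p n)^2)"
  define B where "B = (\<Sum>n. (q n)^2)"
  have A0: "0 \<le> A" unfolding A_def by (intro suminf_nonneg assms) auto
  have B0: "0 \<le> B" unfolding B_def by (intro suminf_nonneg assms) auto
  have part: "(\<Sum>n<N. \<bar>p n * q n\<bar>) \<le> sqrt (A * B)" for N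
  proof -
    have "(\<Sum>n<N. \<bar>p n\<bar> * \<bar>q n\<bar>)^2 \<le> (\<Sum>n<N. \<bar>p n\<bar>^2) * (\<Sum>n<N. \<bar>q n\<bar>^2)"
      by (rule Cauchy_Schwarz_ineq_sum)
    also have "\<dots> \<le> A * B"
    proof (intro mult_mono)
      show "(\<Sum>n<N. \<bar>p n\<bar>^2) \<le> A" unfolding A_def using assms(1)
        by (simp add: sum_le_suminf)
      show "(\<Sum>n<N. \<bar>q n\<bar>^2) \<le> B" unfolding B_def using assms(2)
        by (simp add: sum_le_suminf)
    qed (auto simp: A0 B0 intro: sum_nonneg)
    finally have "(\<Sum>n<N. \<bar>p n * q n\<bar>)^2 \<le> A * B" by (simp add: abs_mult)
    then have "sqrt ((\<Sum>n<N. \<bar>p n * q n\<bar>)^2) \<le> sqrt (A*B)" by (rule real_sqrt_le_mono)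
    then show ?thesis by (simp add: sum_nonneg)
  qed
  show s: "summable (\<lambda>n. \<bar>p n * q n\<bar>)"
    by (rule summableI_nonneg_bounded[where x="sqrt (A*B)"]) (use part in auto)
  have "(\<Sum>n. \<bar>p n * q n\<bar>) \<le> sqrt (A*B)"
    by (rule suminf_le_const[OF s part])
  moreover have "0 \<le> (\<Sum>n. \<bar>p n * q n\<bar>)" by (intro suminf_nonneg s) auto
  ultimately have "(\<Sum>n. \<bar>p n * q n\<bar>)^2 \<le> (sqrt (A*B))^2"
    by (intro power_mono) auto
  then show "(\<Sum>n. \<bar>p n * q n\<bar>)^2 \<le> (\<Sum>n. (p n)^2) * (\<Sum>n. (q n)^2)"
    using A0 B0 by (simp add: A_def B_def)
qed

lemma SCS2:
  fixes p q :: "nat \<Rightarrow> real"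
  assumes "summable (\<lambda>n. (p n)^2)" "summable (\<lambda>n. (q n)^2)"
  shows "summable (\<lambda>n. p n * q n)"
    and "(\<Sum>n. p n * q n)^2 \<le> (\<Sum>n. (p n)^2) * (\<Sum>n. (q n)^2)"
proof -
  have s: "summable (\<lambda>n. \<bar>p n * q n\<bar>)" using SCS(1)[OF assms] .
  then show s2: "summable (\<lambda>n. p n * q n)" by (rule summable_rabs_cancel)
  have "\<bar>\<Sum>n. p n * q n\<bar> \<le> (\<Sum>n. \<bar>p n * q n\<bar>)" by (rule summable_rabs[OF s])
  then have "(\<Sum>n. p n * q n)^2 \<le> (\<Sum>n. \<bar>p n * q n\<bar>)^2"
    by (metis abs_ge_zero power2_abs power_mono)
  also have "\<dots> \<le> (\<Sum>n. (p n)^2) * (\<Sum>n. (q n)^2)" by (rule SCS(2)[OF assms])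
  finally show "(\<Sum>n. p n * q n)^2 \<le> (\<Sum>n. (p n)^2) * (\<Sum>n. (q n)^2)" .
qed

lemma WCS:
  fixes c d w :: "nat \<Rightarrow> real"
  assumes w: "\<And>n. 0 \<le> w n" and c0: "\<And>n. w n = 0 \<Longrightarrow> c n = 0"
    and sc: "summable (\<lambda>n. (c n)^2 / w n)" and sd: "summable (\<lambda>n. w n * (d n)^2)"
  shows "summable (\<lambda>n. \<bar>c n * d n\<bar>)" "summable (\<lambda>n. c n * d n)"
    and "(\<Sum>n. c n * d n)^2 \<le> (\<Sum>n. (c n)^2 / w n) * (\<Sum>n. w n * (d n)^2)"
    and "(\<Sum>n. \<bar>c n * d n\<bar>)^2 \<le> (\<Sum>n. (c n)^2 / w n) * (\<Sum>n. w n * (d n)^2)"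
proof -
  define p where "p n = c n / sqrt (w n)" for n
  define q where "q n = sqrt (w n) * d n" for n
  have pq: "p n * q n = c n * d n" for n
    using w[of n] c0[of n] by (cases "w n = 0") (auto simp: p_def q_def)
  have p2: "(p n)^2 = (c n)^2 / w n" for n using w[of n] by (simp add: p_def power_divide)
  have q2: "(q n)^2 = w n * (d n)^2" for n using w[of n] by (simp add: q_def power_mult_distrib)
  have a: "summable (\<lambda>n. (p n)^2)" "summable (\<lambda>n. (q n)^2)" using sc sd by (simp_all add: p2 q2)
  show "summable (\<lambda>n. \<bar>c n * d n\<bar>)" using SCS(1)[OF a] by (simp add: pq)
  show "summable (\<lambda>n. c n * d n)" using SCS2(1)[OF a] by (simp add: pq)
  show "(\<Sum>n. c n * d n)^2 \<le> (\<Sum>n. (c n)^2 / w n) * (\<Sum>n. w n * (d n)^2)"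
    using SCS2(2)[OF a] by (simp add: pq p2 q2)
  show "(\<Sum>n. \<bar>c n * d n\<bar>)^2 \<le> (\<Sum>n. (c n)^2 / w n) * (\<Sum>n. w n * (d n)^2)"
    using SCS(2)[OF a] by (simp add: pq p2 q2)
qed



lemma L2I_D: assumes "f \<in> L2I" shows "f \<in> borel_measurable M01" "integrable M01 (\<lambda>x. (f x)^2)"
  using assms by (auto simp: L2I_iff)

lemma L2I_cong: assumes "f \<in> L2I" "\<And>x. x \<in> {0..1} \<Longrightarrow> f x = g x" shows "g \<in> L2I"
proof -
  have "g \<in> borel_measurable M01" using L2I_D(1)[OF assms(1)]
    by (rule measurable_cong[THEN iffD1, rotated]) (use assms(2) in auto)
  moreover have "integrable M01 (\<lambda>x. (g x)^2) = integrable M01 (\<lambda>x. (f x)^2)"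
    by (rule Bochner_Integration.integrable_cong[OF refl]) (simp add: assms(2))
  ultimately show ?thesis using L2I_D(2)[OF assms(1)] by (simp add: L2I_iff)
qed

lemma L2I_prod_int: assumes "f \<in> L2I" "g \<in> L2I" shows "integrable M01 (\<lambda>x. f x * g x)"
proof (rule Bochner_Integration.integrable_bound[where f="\<lambda>x. (f x)^2 + (g x)^2"])
  show "integrable M01 (\<lambda>x. (f x)^2 + (g x)^2)" using assms by (auto dest: L2I_D)
  have [measurable]: "f \<in> borel_measurable M01" "g \<in> borel_measurable M01" using assms by (auto dest: L2I_D)
  show "(\<lambda>x. f x * g x) \<in> borel_measurable M01" by measurable
  show "AE x in M01. norm (f x * g x) \<le> norm ((f x)^2 + (g x)^2)"
  proof (intro AE_I2)
    fix x
    have "2 * (\<bar>f x\<bar> * \<bar>g x\<bar>) \<le> (f x)^2 + (g x)^2"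
      using sum_squares_bound[of "\<bar>f x\<bar>" "\<bar>g x\<bar>"] by (simp add: power2_eq_square mult.assoc)
    moreover have "0 \<le> \<bar>f x\<bar> * \<bar>g x\<bar>" by simp
    ultimately have "\<bar>f x\<bar> * \<bar>g x\<bar> \<le> (f x)^2 + (g x)^2" by linarith
    then show "norm (f x * g x) \<le> norm ((f x)^2 + (g x)^2)" by (simp add: abs_mult)
  qed
qed

lemma L2I_lin: assumes "f \<in> L2I" "g \<in> L2I" shows "(\<lambda>x. a * f x + b * g x) \<in> L2I"
proof -
  have [measurable]: "f \<in> borel_measurable M01" "g \<in> borel_measurable M01" using assms by (auto dest: L2I_D)
  have m: "(\<lambda>x. a * f x + b * g x) \<in> borel_measurable M01" by measurable
  have "integrable M01 (\<lambda>x. (a * f x + b * g x)^2)"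
  proof -
    have e: "(\<lambda>x. (a * f x + b * g x)^2) = (\<lambda>x. a^2 * (f x)^2 + b^2 * (g x)^2 + (2*a*b) * (f x * g x))"
      by (auto simp: power2_eq_square algebra_simps)
    show ?thesis unfolding e using assms L2I_prod_int[OF assms] by (auto dest!: L2I_D)
  qed
  with m show ?thesis by (simp add: L2I_iff)
qed

lemma L2I_zero: "(\<lambda>_. 0) \<in> L2I" by (simp add: L2I_iff)

lemma L2I_scale: assumes "f \<in> L2I" shows "(\<lambda>x. a * f x) \<in> L2I"
  using L2I_lin[OF assms L2I_zero, of a 0] by simp

lemma L2I_diff: assumes "f \<in> L2I" "g \<in> L2I" shows "(\<lambda>x. f x - g x) \<in> L2I"
  using L2I_lin[OF assms, of 1 "-1"] by simp

lemma L2I_sum: assumes "\<And>j. j \<in> J \<Longrightarrow> e j \<in> L2I" shows "(\<lambda>x. \<Sum>j\<in>J. c j * e j x) \<in> L2I"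
  using assms
proof (induction J rule: infinite_finite_induct)
  case (insert j J)
  have "(\<lambda>x. 1 * c j * e j x + 1 * (\<Sum>j\<in>J. c j * e j x)) \<in> L2I"
    using insert by (intro L2I_lin L2I_scale[where a="c j"]) auto
  with insert show ?case by (simp add: mult.assoc)
qed (auto simp: L2I_zero)

lemma l2_ip_comm: "l2_ip f g = l2_ip g f" by (simp add: l2_ip_eq mult.commute)

lemma l2_ip_lin: assumes "f \<in> L2I" "g \<in> L2I" "h \<in> L2I"
  shows "l2_ip (\<lambda>x. a * f x + b * g x) h = a * l2_ip f h + b * l2_ip g h"
proof -
  have "l2_ip (\<lambda>x. a * f x + b * g x) h = (\<integral>x. a * (f x * h x) + b * (g x * h x) \<partial>M01)"
    by (simp add: l2_ip_eq algebra_simps)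
  also have "\<dots> = a * l2_ip f h + b * l2_ip g h"
    using L2I_prod_int[OF assms(1,3)] L2I_prod_int[OF assms(2,3)] by (simp add: l2_ip_eq)
  finally show ?thesis .
qed

lemma l2_ip_lin2: assumes "f \<in> L2I" "g \<in> L2I" "h \<in> L2I"
  shows "l2_ip h (\<lambda>x. a * f x + b * g x) = a * l2_ip h f + b * l2_ip h g"
  using l2_ip_lin[OF assms] by (simp add: l2_ip_comm)

lemma l2_ip_diff: assumes "f \<in> L2I" "g \<in> L2I" "h \<in> L2I"
  shows "l2_ip (\<lambda>x. f x - g x) h = l2_ip f h - l2_ip g h"
  using l2_ip_lin[OF assms, of 1 "-1"] by simp

lemma l2_ip_sum: assumes "\<And>j. j \<in> J \<Longrightarrow> e j \<in> L2I" "h \<in> L2I"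
  shows "l2_ip (\<lambda>x. \<Sum>j\<in>J. c j * e j x) h = (\<Sum>j\<in>J. c j * l2_ip (e j) h)"
proof -
  have "l2_ip (\<lambda>x. \<Sum>j\<in>J. c j * e j x) h = (\<integral>x. (\<Sum>j\<in>J. c j * (e j x * h x)) \<partial>M01)"
    by (simp add: l2_ip_eq sum_distrib_right mult.assoc)
  also have "\<dots> = (\<Sum>j\<in>J. (\<integral>x. c j * (e j x * h x) \<partial>M01))"
    by (rule Bochner_Integration.integral_sum) (auto intro: L2I_prod_int assms)
  also have "\<dots> = (\<Sum>j\<in>J. c j * l2_ip (e j) h)"
    by (simp add: l2_ip_eq)
  finally show ?thesis .
qed

lemma l2_ip_cong_on: assumes "\<And>x. x \<in> {0..1} \<Longrightarrow> f x = f' x" shows "l2_ip f g = l2_ip f' g"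
  unfolding l2_ip_eq by (rule Bochner_Integration.integral_cong[OF refl]) (simp add: assms)


lemma l2_ip_cong_AE_meas: assumes "l2_eq f f'" "f \<in> L2I" "f' \<in> L2I" "g \<in> L2I"
  shows "l2_ip f g = l2_ip f' g"
  unfolding l2_ip_eq
proof (rule integral_cong_AE)
  show "(\<lambda>x. f x * g x) \<in> borel_measurable M01" "(\<lambda>x. f' x * g x) \<in> borel_measurable M01"
    using L2I_prod_int assms by (auto intro: borel_measurable_integrable)
  show "AE x in M01. f x * g x = f' x * g x" using assms(1) unfolding l2_eq_iff by auto
qed

lemma l2_ip_nonneg: "0 \<le> l2_ip f f" unfolding l2_ip_eq by (intro integral_nonneg_AE) auto

lemma l2_CS: assumes "f \<in> L2I" "g \<in> L2I" shows "(l2_ip f g)^2 \<le> l2_ip f f * l2_ip g g"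
proof -
  define A where "A = l2_ip f f"
  define B where "B = l2_ip f g"
  define C where "C = l2_ip g g"
  have q: "0 \<le> A - 2 * t * B + t^2 * C" for t
  proof -
    define D where "D = (\<lambda>x. 1 * f x + (-t) * g x)"
    have d: "D \<in> L2I" using assms unfolding D_def by (intro L2I_lin)
    have e1: "l2_ip D D = 1 * l2_ip f D + (-t) * l2_ip g D"
      using l2_ip_lin[OF assms d] unfolding D_def .
    have e2: "l2_ip f D = 1 * A + (-t) * B"
      using l2_ip_lin2[OF assms assms(1)] unfolding D_def A_def B_def .
    have e3: "l2_ip g D = 1 * B + (-t) * C"
      using l2_ip_lin2[OF assms assms(2), of 1 "-t"] l2_ip_comm[of g f] unfolding D_def B_def C_def by simp
    have "0 \<le> l2_ip D D" by (rule l2_ip_nonneg)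
    also have "\<dots> = A - 2 * t * B + t^2 * C"
      unfolding e1 e2 e3 by (simp add: power2_eq_square algebra_simps)
    finally show ?thesis .
  qed
  have C0: "0 \<le> C" unfolding C_def by (rule l2_ip_nonneg)
  show ?thesis
  proof (cases "C = 0")
    case True
    have "B = 0"
    proof (rule ccontr)
      assume "B \<noteq> 0"
      have "0 \<le> A - 2 * ((A + 1) / (2 * B)) * B" using q[of "(A+1)/(2*B)"] True by simp
      with \<open>B \<noteq> 0\<close> show False by simp
    qed
    then show ?thesis using True by (simp add: B_def C_def)
  next
    case False
    then have Cp: "C > 0" using C0 by simp
    have "0 \<le> A - 2 * (B/C) * B + (B/C)^2 * C" by (rule q)
    also have "\<dots> = A - B^2 / C" using Cp by (simp add: power2_eq_square field_simps)
    finally have "B^2 / C \<le> A" by simp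
    then have "B^2 \<le> A * C" using Cp by (simp add: pos_divide_le_eq)
    then show ?thesis by (simp add: A_def B_def C_def)
  qed
qed

lemma l2_abs_int_bound: assumes "f \<in> L2I" "g \<in> L2I"
  shows "(\<integral>x. \<bar>f x * g x\<bar> \<partial>M01) \<le> (l2_ip f f + l2_ip g g) / 2"
proof -
  have "(\<integral>x. \<bar>f x * g x\<bar> \<partial>M01) \<le> (\<integral>x. ((f x)^2 + (g x)^2) / 2 \<partial>M01)"
  proof (rule integral_mono)
    show "integrable M01 (\<lambda>x. \<bar>f x * g x\<bar>)" using L2I_prod_int[OF assms] by simp
    show "integrable M01 (\<lambda>x. ((f x)^2 + (g x)^2) / 2)" using assms
      by (intro integrable_divide_zero Bochner_Integration.integrable_add) (auto dest: L2I_D)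
    fix x
    show "\<bar>f x * g x\<bar> \<le> ((f x)^2 + (g x)^2) / 2"
      using sum_squares_bound[of "\<bar>f x\<bar>" "\<bar>g x\<bar>"] by (simp add: power2_eq_square abs_mult)
  qed
  also have "\<dots> = (l2_ip f f + l2_ip g g) / 2"
    using assms by (auto dest!: L2I_D simp: l2_ip_eq power2_eq_square)
  finally show ?thesis .
qed




locale expn =
  fixes e :: "nat \<Rightarrow> real \<Rightarrow> real" and w c :: "nat \<Rightarrow> real"
  assumes eL2: "\<And>n. e n \<in> L2I" and enorm: "\<And>n. l2_ip (e n) (e n) = 1"
    and w0: "\<And>n. 0 \<le> w n" and ws: "summable w"
    and pw: "\<And>x. x \<in> {0..1} \<Longrightarrow> summable (\<lambda>n. w n * (e n x)^2)"
    and c0: "\<And>n. w n = 0 \<Longrightarrow> c n = 0" and cs: "summable (\<lambda>n. (c n)^2 / w n)"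
begin

definition F where "F = (\<lambda>x. \<Sum>n. c n * e n x)"

lemma pt_abs: "x \<in> {0..1} \<Longrightarrow> summable (\<lambda>n. \<bar>c n * e n x\<bar>)"
  using WCS(1)[OF w0 c0 cs pw] by blast

lemma pt: "x \<in> {0..1} \<Longrightarrow> summable (\<lambda>n. c n * e n x)"
  using WCS(2)[OF w0 c0 cs pw] by blast

lemma pt_sums: "x \<in> {0..1} \<Longrightarrow> (\<lambda>n. c n * e n x) sums F x"
  unfolding F_def using pt by (simp add: summable_sums)

lemma c_abs: "summable (\<lambda>n. \<bar>c n\<bar>)"
proof -
  have "summable (\<lambda>n. w n * 1^2)" using ws by simp
  from WCS(1)[OF w0 c0 cs this] show ?thesis by simp
qed

lemma pt_bound: "x \<in> {0..1} \<Longrightarrow> (F x)^2 \<le> (\<Sum>n. (c n)^2 / w n) * (\<Sum>n. w n * (e n x)^2)"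
  unfolding F_def using WCS(3)[OF w0 c0 cs pw] by blast

lemma e_meas[measurable]: "e n \<in> borel_measurable M01" using eL2 by (auto dest: L2I_D)

lemma F_meas[measurable]: "F \<in> borel_measurable M01" unfolding F_def by measurable

lemma B_int: "integrable M01 (\<lambda>x. \<Sum>n. w n * (e n x)^2)"
proof (rule integrable_suminf)
  show "integrable M01 (\<lambda>x. w n * (e n x)^2)" for n using eL2[of n] by (auto dest: L2I_D)
  show "AE x in M01. summable (\<lambda>n. norm (w n * (e n x)^2))"
    by (rule AE_I2) (use pw w0 in auto)
  have "(\<integral>x. norm (w n * (e n x)^2) \<partial>M01) = w n" for n
  proof -
    have "(\<integral>x. norm (w n * (e n x)^2) \<partial>M01) = (\<integral>x. w n * (e n x * e n x) \<partial>M01)"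
      using w0[of n] by (intro Bochner_Integration.integral_cong) (auto simp: power2_eq_square)
    also have "\<dots> = w n * l2_ip (e n) (e n)" by (simp add: l2_ip_eq)
    finally show ?thesis using enorm by simp
  qed
  then show "summable (\<lambda>n. \<integral>x. norm (w n * (e n x)^2) \<partial>M01)" using ws by simp
qed

lemma F_L2: "F \<in> L2I"
proof -
  have "integrable M01 (\<lambda>x. (F x)^2)"
  proof (rule Bochner_Integration.integrable_bound)
    show "integrable M01 (\<lambda>x. (\<Sum>n. (c n)^2 / w n) * (\<Sum>n. w n * (e n x)^2))"
      using B_int by simp
    show "(\<lambda>x. (F x)^2) \<in> borel_measurable M01" by measurable
    show "AE x in M01. norm ((F x)^2) \<le> norm ((\<Sum>n. (c n)^2 / w n) * (\<Sum>n. w n * (e n x)^2))"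
    proof (rule AE_I2)
      fix x assume "x \<in> space M01"
      then have x: "x \<in> {0..1}" by simp
      have "(F x)^2 \<le> (\<Sum>n. (c n)^2 / w n) * (\<Sum>n. w n * (e n x)^2)" by (rule pt_bound[OF x])
      then show "norm ((F x)^2) \<le> norm ((\<Sum>n. (c n)^2 / w n) * (\<Sum>n. w n * (e n x)^2))"
        by simp
    qed
  qed
  then show ?thesis using F_meas by (simp add: L2I_iff)
qed

lemma ip_sums:
  assumes g: "g \<in> L2I"
  shows "(\<lambda>n. c n * l2_ip (e n) g) sums l2_ip F g"
proof -
  let ?f = "\<lambda>n x. c n * e n x * g x"
  have gm[measurable]: "g \<in> borel_measurable M01" using g by (auto dest: L2I_D)
  have i: "integrable M01 (?f n)" for n
    using L2I_prod_int[OF eL2[of n] g] by (simp add: mult.assoc)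
  have s: "AE x in M01. summable (\<lambda>n. norm (?f n x))"
  proof (rule AE_I2)
    fix x assume "x \<in> space M01"
    then have "summable (\<lambda>n. \<bar>c n * e n x\<bar> * \<bar>g x\<bar>)" using pt_abs[of x] by (intro summable_mult2) auto
    then show "summable (\<lambda>n. norm (?f n x))" by (simp add: abs_mult)
  qed
  have ss: "summable (\<lambda>n. \<integral>x. norm (?f n x) \<partial>M01)"
  proof (rule summable_comparison_test)
    show "summable (\<lambda>n. \<bar>c n\<bar> * ((1 + l2_ip g g) / 2))" using c_abs by (rule summable_mult2)
    show "\<exists>N. \<forall>n\<ge>N. norm (\<integral>x. norm (?f n x) \<partial>M01) \<le> \<bar>c n\<bar> * ((1 + l2_ip g g) / 2)"
    proof (intro exI allI impI)
      fix n
      have "(\<integral>x. norm (?f n x) \<partial>M01) = \<bar>c n\<bar> * (\<integral>x. \<bar>e n x * g x\<bar> \<partial>M01)"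
        by (simp add: abs_mult mult.assoc)
      also have "\<dots> \<le> \<bar>c n\<bar> * ((1 + l2_ip g g) / 2)"
        using l2_abs_int_bound[OF eL2[of n] g] enorm[of n] by (intro mult_left_mono) auto
      finally show "norm (\<integral>x. norm (?f n x) \<partial>M01) \<le> \<bar>c n\<bar> * ((1 + l2_ip g g) / 2)"
        by (simp add: integral_nonneg_AE)
    qed
  qed
  have "(\<lambda>n. integral\<^sup>L M01 (?f n)) sums (\<integral>x. (\<Sum>n. ?f n x) \<partial>M01)"
    by (rule sums_integral[OF i s ss])
  moreover have "integral\<^sup>L M01 (?f n) = c n * l2_ip (e n) g" for n
    by (simp add: l2_ip_eq mult.assoc)
  moreover have "(\<integral>x. (\<Sum>n. ?f n x) \<partial>M01) = l2_ip F g"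
    unfolding l2_ip_eq
  proof (rule Bochner_Integration.integral_cong[OF refl])
    fix x assume "x \<in> space M01"
    then show "(\<Sum>n. ?f n x) = F x * g x" unfolding F_def
      using pt[of x] by (simp add: suminf_mult2)
  qed
  ultimately show ?thesis by simp
qed

lemma ip: "g \<in> L2I \<Longrightarrow> l2_ip F g = (\<Sum>n. c n * l2_ip (e n) g)"
  using ip_sums by (simp add: sums_iff)

lemma ip_summable: "g \<in> L2I \<Longrightarrow> summable (\<lambda>n. c n * l2_ip (e n) g)"
  using ip_sums by (simp add: sums_iff)

end




lemma summable_prod_w:
  fixes F G w :: "nat \<Rightarrow> real"
  assumes w: "\<And>n. 0 \<le> w n" and F0: "\<And>n. w n = 0 \<Longrightarrow> F n = 0"
    and sF: "summable (\<lambda>n. (F n)^2 / w n)" and sG: "summable (\<lambda>n. (G n)^2 / w n)"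
  shows "summable (\<lambda>n. F n * G n / w n)"
proof -
  have "summable (\<lambda>n. w n * (G n / w n)^2)"
  proof -
    have "w n * (G n / w n)^2 = (G n)^2 / w n" for n
      using w[of n] by (cases "w n = 0") (auto simp: power2_eq_square field_simps)
    then show ?thesis using sG by simp
  qed
  from WCS(2)[OF w F0 sF this] show ?thesis by simp
qed

lemma summable_lin_w:
  fixes F G w :: "nat \<Rightarrow> real"
  assumes w: "\<And>n. 0 \<le> w n" and F0: "\<And>n. w n = 0 \<Longrightarrow> F n = 0"
    and sF: "summable (\<lambda>n. (F n)^2 / w n)" and sG: "summable (\<lambda>n. (G n)^2 / w n)"
  shows "summable (\<lambda>n. (a * F n + b * G n)^2 / w n)"
proof -
  have e: "(a * F n + b * G n)^2 / w n = a^2 * ((F n)^2 / w n) + b^2 * ((G n)^2 / w n) + (2*a*b) * (F n * G n / w n)" for n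
    by (simp add: power2_eq_square field_simps add_divide_distrib)
  show ?thesis unfolding e
    using summable_prod_w[OF w F0 sF sG] sF sG
    by (intro summable_add summable_mult) auto
qed

locale onb =
  fixes \<phi> :: "nat \<Rightarrow> real \<Rightarrow> real"
  assumes onb: "orthonormal_basis_L2 \<phi>"
begin

lemma phiL2: "\<phi> n \<in> L2I" using onb unfolding orthonormal_basis_L2_def by auto
lemma orth: "l2_ip (\<phi> i) (\<phi> j) = (if i = j then 1 else 0)" using onb unfolding orthonormal_basis_L2_def by auto
lemma norm1: "l2_ip (\<phi> i) (\<phi> i) = 1" using orth by simp
lemma complete: "f \<in> L2I \<Longrightarrow> (\<And>i. l2_ip f (\<phi> i) = 0) \<Longrightarrow> l2_eq f (\<lambda>_. 0)"
  using onb unfolding orthonormal_basis_L2_def by auto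

lemma coef_extract:
  assumes "expn \<phi> w c"
  shows "l2_ip (expn.F \<phi> c) (\<phi> j) = c j"
proof -
  have "l2_ip (expn.F \<phi> c) (\<phi> j) = (\<Sum>n. c n * l2_ip (\<phi> n) (\<phi> j))"
    using expn.ip[OF assms phiL2] .
  also have "\<dots> = (\<Sum>n. if n = j then c n else 0)" by (intro suminf_cong) (auto simp: orth)
  also have "\<dots> = c j" using sums_single[of j c] by (simp add: sums_iff)
  finally show ?thesis .
qed

end

locale wsp = onb +
  fixes w :: "nat \<Rightarrow> real"
  assumes w0: "\<And>n. 0 \<le> w n" and ws: "summable w"
    and pw: "\<And>x. x \<in> {0..1} \<Longrightarrow> summable (\<lambda>n. w n * (\<phi> n x)^2)"
begin

lemma expnI: "(\<And>n. w n = 0 \<Longrightarrow> c n = 0) \<Longrightarrow> summable (\<lambda>n. (c n)^2 / w n) \<Longrightarrow> expn \<phi> w c"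
  by (unfold_locales) (auto simp: phiL2 norm1 w0 ws pw)

abbreviation co where "co f i \<equiv> l2_ip f (\<phi> i)"

lemma coefD:
  assumes "f \<in> coef_space \<phi> w"
  shows "f \<in> L2I" "\<And>i. w i = 0 \<Longrightarrow> co f i = 0" "summable (\<lambda>i. (co f i)^2 / w i)"
    "\<And>x. x \<in> {0..1} \<Longrightarrow> (\<lambda>i. co f i * \<phi> i x) sums f x"
    "\<And>x. x \<notin> {0..1} \<Longrightarrow> f x = 0"
proof -
  obtain F where F0: "\<And>i. w i = 0 \<Longrightarrow> F i = 0" and sF: "summable (\<lambda>i. (F i)^2 / w i)"
    and su: "\<And>x. x \<in> {0..1} \<Longrightarrow> (\<lambda>i. F i * \<phi> i x) sums f x"
    and out: "\<And>x. x \<notin> {0..1} \<Longrightarrow> f x = 0"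
    using assms unfolding coef_space_def by blast
  interpret ex: expn \<phi> w F by (rule expnI[OF F0 sF])
  have eq: "ex.F x = f x" if "x \<in> {0..1}" for x
    using ex.pt_sums[OF that] su[OF that] sums_unique2 by blast
  show fL: "f \<in> L2I" using L2I_cong[OF ex.F_L2 eq] .
  have co: "co f i = F i" for i
    using l2_ip_cong_on[of f ex.F "\<phi> i"] eq coef_extract[OF ex.expn_axioms] by simp
  show "\<And>i. w i = 0 \<Longrightarrow> co f i = 0" using co F0 by simp
  show "summable (\<lambda>i. (co f i)^2 / w i)" using co sF by simp
  show "\<And>x. x \<in> {0..1} \<Longrightarrow> (\<lambda>i. co f i * \<phi> i x) sums f x" using co su by simp
  show "\<And>x. x \<notin> {0..1} \<Longrightarrow> f x = 0" by (rule out)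
qed

lemma coefI:
  assumes "\<And>i. w i = 0 \<Longrightarrow> F i = 0" "summable (\<lambda>i. (F i)^2 / w i)"
    "\<And>x. x \<in> {0..1} \<Longrightarrow> (\<lambda>i. F i * \<phi> i x) sums f x"
    "\<And>x. x \<notin> {0..1} \<Longrightarrow> f x = 0"
  shows "f \<in> coef_space \<phi> w"
  unfolding coef_space_def using assms by blast

lemma coef_co:
  assumes "\<And>i. w i = 0 \<Longrightarrow> F i = 0" "summable (\<lambda>i. (F i)^2 / w i)"
    "\<And>x. x \<in> {0..1} \<Longrightarrow> (\<lambda>i. F i * \<phi> i x) sums f x"
  shows "co f i = F i"
proof -
  interpret ex: expn \<phi> w F by (rule expnI[OF assms(1,2)])
  have eq: "ex.F x = f x" if "x \<in> {0..1}" for x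
    using ex.pt_sums[OF that] assms(3)[OF that] sums_unique2 by blast
  show ?thesis using l2_ip_cong_on[of f ex.F "\<phi> i"] eq coef_extract[OF ex.expn_axioms] by simp
qed

lemma coef_lin:
  assumes f: "f \<in> coef_space \<phi> w" and g: "g \<in> coef_space \<phi> w"
  shows "(\<lambda>x. a * f x + b * g x) \<in> coef_space \<phi> w"
    and "co (\<lambda>x. a * f x + b * g x) i = a * co f i + b * co g i"
proof -
  show "(\<lambda>x. a * f x + b * g x) \<in> coef_space \<phi> w"
  proof (rule coefI[where F="\<lambda>i. a * co f i + b * co g i"])
    show "\<And>i. w i = 0 \<Longrightarrow> a * co f i + b * co g i = 0" using coefD(2)[OF f] coefD(2)[OF g] by simp
    show "summable (\<lambda>i. (a * co f i + b * co g i)^2 / w i)"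
      by (rule summable_lin_w[OF w0 coefD(2)[OF f] coefD(3)[OF f] coefD(3)[OF g]])
    show "(\<lambda>i. (a * co f i + b * co g i) * \<phi> i x) sums (a * f x + b * g x)" if "x \<in> {0..1}" for x
    proof -
      have "(\<lambda>i. a * (co f i * \<phi> i x) + b * (co g i * \<phi> i x)) sums (a * f x + b * g x)"
        using coefD(4)[OF f that] coefD(4)[OF g that] by (intro sums_add sums_mult)
      then show ?thesis by (simp add: algebra_simps)
    qed
    show "\<And>x. x \<notin> {0..1} \<Longrightarrow> a * f x + b * g x = 0" using coefD(5)[OF f] coefD(5)[OF g] by simp
  qed
  show "co (\<lambda>x. a * f x + b * g x) i = a * co f i + b * co g i"
    using l2_ip_lin[OF coefD(1)[OF f] coefD(1)[OF g] phiL2] .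
qed

lemma coef_ip_eq: "coef_ip \<phi> w f g = (\<Sum>i. co f i * co g i / w i)"
  by (simp add: coef_ip_def)

end



context wsp begin

lemma ip_sym: "coef_ip \<phi> w f g = coef_ip \<phi> w g f"
  unfolding coef_ip_def by (simp add: mult.commute)

lemma ip_lin:
  assumes f: "f \<in> coef_space \<phi> w" and g: "g \<in> coef_space \<phi> w" and h: "h \<in> coef_space \<phi> w"
  shows "coef_ip \<phi> w (\<lambda>x. a * f x + b * g x) h = a * coef_ip \<phi> w f h + b * coef_ip \<phi> w g h"
proof -
  have s1: "summable (\<lambda>i. co f i * co h i / w i)"
    by (rule summable_prod_w[OF w0 coefD(2)[OF f] coefD(3)[OF f] coefD(3)[OF h]])
  have s2: "summable (\<lambda>i. co g i * co h i / w i)"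
    by (rule summable_prod_w[OF w0 coefD(2)[OF g] coefD(3)[OF g] coefD(3)[OF h]])
  have "coef_ip \<phi> w (\<lambda>x. a * f x + b * g x) h = (\<Sum>i. a * (co f i * co h i / w i) + b * (co g i * co h i / w i))"
    unfolding coef_ip_def coef_lin(2)[OF f g] by (simp add: algebra_simps add_divide_distrib)
  also have "\<dots> = a * (\<Sum>i. co f i * co h i / w i) + b * (\<Sum>i. co g i * co h i / w i)"
  proof -
    have "(\<Sum>i. a * (co f i * co h i / w i) + b * (co g i * co h i / w i)) = (\<Sum>i. a * (co f i * co h i / w i)) + (\<Sum>i. b * (co g i * co h i / w i))"
      using s1 s2 by (intro suminf_add[symmetric] summable_mult)
    also have "\<dots> = a * (\<Sum>i. co f i * co h i / w i) + b * (\<Sum>i. co g i * co h i / w i)"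
      using suminf_mult[OF s1, of a] suminf_mult[OF s2, of b] by simp
    finally show ?thesis .
  qed
  finally show ?thesis unfolding coef_ip_def .
qed

lemma ip_pos:
  assumes f: "f \<in> coef_space \<phi> w"
  shows "0 \<le> coef_ip \<phi> w f f" and "coef_ip \<phi> w f f = 0 \<Longrightarrow> f = (\<lambda>_. 0)"
proof -
  have s: "summable (\<lambda>i. (co f i)^2 / w i)" using coefD(3)[OF f] .
  have nn: "0 \<le> (co f i)^2 / w i" for i using w0[of i] by simp
  have e: "coef_ip \<phi> w f f = (\<Sum>i. (co f i)^2 / w i)" unfolding coef_ip_def by (simp add: power2_eq_square)
  show "0 \<le> coef_ip \<phi> w f f" unfolding e by (intro suminf_nonneg s nn)
  assume "coef_ip \<phi> w f f = 0"
  then have "\<forall>i. (co f i)^2 / w i = 0" using suminf_eq_zero_iff[OF s nn] e by simp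
  then have z: "co f i = 0" for i using coefD(2)[OF f, of i] w0[of i]
    by (cases "w i = 0") auto
  show "f = (\<lambda>_. 0)"
  proof
    fix x show "f x = 0"
    proof (cases "x \<in> {0..1}")
      case True
      from coefD(4)[OF f True] have "(\<lambda>i. 0) sums f x" by (simp add: z)
      then show ?thesis using sums_zero sums_unique2 by blast
    qed (use coefD(5)[OF f] in auto)
  qed
qed

lemma ksec:
  assumes x: "x \<in> {0..1}"
  shows "kernel_section {0..1} (mercer_kernel w \<phi>) x \<in> coef_space \<phi> w"
    and "\<And>i. co (kernel_section {0..1} (mercer_kernel w \<phi>) x) i = w i * \<phi> i x"
proof -
  let ?F = "\<lambda>i. w i * \<phi> i x"
  have F0: "\<And>i. w i = 0 \<Longrightarrow> ?F i = 0" by simp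
  have sF: "summable (\<lambda>i. (?F i)^2 / w i)"
  proof -
    have "(?F i)^2 / w i = w i * (\<phi> i x)^2" for i
      using w0[of i] by (cases "w i = 0") (auto simp: power2_eq_square)
    then show ?thesis using pw[OF x] by simp
  qed
  interpret ex: expn \<phi> w ?F by (rule expnI[OF F0 sF])
  have su: "(\<lambda>i. ?F i * \<phi> i y) sums kernel_section {0..1} (mercer_kernel w \<phi>) x y" if y: "y \<in> {0..1}" for y
  proof -
    have "(\<lambda>i. ?F i * \<phi> i y) sums ex.F y" by (rule ex.pt_sums[OF y])
    moreover have "ex.F y = kernel_section {0..1} (mercer_kernel w \<phi>) x y"
      unfolding ex.F_def kernel_section_def mercer_kernel_def using y by (simp add: mult_ac)
    ultimately show ?thesis by simp
  qed
  show "kernel_section {0..1} (mercer_kernel w \<phi>) x \<in> coef_space \<phi> w"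
    by (rule coefI[OF F0 sF su]) (auto simp: kernel_section_def)
  show "\<And>i. co (kernel_section {0..1} (mercer_kernel w \<phi>) x) i = w i * \<phi> i x"
    by (rule coef_co[OF F0 sF su])
qed

lemma reproducing:
  assumes x: "x \<in> {0..1}" and f: "f \<in> coef_space \<phi> w"
  shows "coef_ip \<phi> w f (kernel_section {0..1} (mercer_kernel w \<phi>) x) = f x"
proof -
  have "coef_ip \<phi> w f (kernel_section {0..1} (mercer_kernel w \<phi>) x) = (\<Sum>i. co f i * (w i * \<phi> i x) / w i)"
    unfolding coef_ip_def ksec(2)[OF x] ..
  also have "\<dots> = (\<Sum>i. co f i * \<phi> i x)"
    by (intro suminf_cong) (use coefD(2)[OF f] in auto)
  also have "\<dots> = f x" using coefD(4)[OF f x] by (simp add: sums_iff)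
  finally show ?thesis .
qed

end



context wsp begin

lemma coef_diff:
  assumes f: "f \<in> coef_space \<phi> w" and g: "g \<in> coef_space \<phi> w"
  shows "(\<lambda>x. f x - g x) \<in> coef_space \<phi> w" "co (\<lambda>x. f x - g x) i = co f i - co g i"
proof -
  have e: "(\<lambda>x. f x - g x) = (\<lambda>x. 1 * f x + (-1) * g x)" by simp
  show "(\<lambda>x. f x - g x) \<in> coef_space \<phi> w" unfolding e by (rule coef_lin(1)[OF f g])
  show "co (\<lambda>x. f x - g x) i = co f i - co g i" unfolding e coef_lin(2)[OF f g] by simp
qed

lemma ip_self: "coef_ip \<phi> w f f = (\<Sum>i. (co f i)^2 / w i)"
  unfolding coef_ip_def by (simp add: power2_eq_square)

lemma complete_H:
  assumes u: "\<forall>n. u n \<in> coef_space \<phi> w"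
    and cau: "\<forall>e>0. \<exists>N. \<forall>m\<ge>N. \<forall>n\<ge>N. coef_ip \<phi> w (\<lambda>x. u m x - u n x) (\<lambda>x. u m x - u n x) < e"
  shows "\<exists>f\<in>coef_space \<phi> w. (\<lambda>n. coef_ip \<phi> w (\<lambda>x. u n x - f x) (\<lambda>x. u n x - f x)) \<longlonglongrightarrow> 0"
proof -
  define U where "U n i = co (u n) i" for n i
  have nn: "0 \<le> (d :: real)^2 / w i" for d i using w0[of i] by simp
  have ipd: "coef_ip \<phi> w (\<lambda>x. u m x - u n x) (\<lambda>x. u m x - u n x) = (\<Sum>i. (U m i - U n i)^2 / w i)" for m n
    unfolding ip_self coef_diff(2)[OF u[rule_format] u[rule_format]] U_def ..
  have sd: "summable (\<lambda>i. (U m i - U n i)^2 / w i)" for m n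
    using coefD(3)[OF coef_diff(1)[OF u[rule_format] u[rule_format]]]
    unfolding coef_diff(2)[OF u[rule_format] u[rule_format]] U_def .
  have term_le: "(U m i - U n i)^2 / w i \<le> (\<Sum>i. (U m i - U n i)^2 / w i)" for m n i
    using sum_le_suminf[OF sd, of "{i}"] nn by simp
  have wz: "w i = 0 \<Longrightarrow> U n i = 0" for n i unfolding U_def using coefD(2)[OF u[rule_format]] by blast
  have conv: "convergent (\<lambda>n. U n i)" for i
  proof (cases "w i = 0")
    case True then show ?thesis using wz by (simp add: convergent_const)
  next
    case False
    then have wp: "w i > 0" using w0[of i] by simp
    have "Cauchy (\<lambda>n. U n i)"
    proof (rule CauchyI)
      fix e :: real assume e: "0 < e"
      obtain N where N: "\<forall>m\<ge>N. \<forall>n\<ge>N. coef_ip \<phi> w (\<lambda>x. u m x - u n x) (\<lambda>x. u m x - u n x) < e^2 / w i"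
        using cau e wp by (meson divide_pos_pos zero_less_power)
      show "\<exists>M. \<forall>m\<ge>M. \<forall>n\<ge>M. norm (U m i - U n i) < e"
      proof (intro exI allI impI)
        fix m n assume "N \<le> m" "N \<le> n"
        then have "(\<Sum>i. (U m i - U n i)^2 / w i) < e^2 / w i" using N unfolding ipd by blast
        then have "(U m i - U n i)^2 / w i < e^2 / w i" using term_le[of m i n] by linarith
        then have "(U m i - U n i)^2 < e^2" using wp by (simp add: divide_less_cancel)
        then have "\<bar>U m i - U n i\<bar>^2 < e^2" by simp
        then show "norm (U m i - U n i) < e" using e by (simp add: power2_less_imp_less)
      qed
    qed
    then show ?thesis by (simp add: Cauchy_convergent_iff)
  qed
  define F where "F i = lim (\<lambda>n. U n i)" for i
  have lim: "(\<lambda>n. U n i) \<longlonglongrightarrow> F i" for i using conv[of i] unfolding F_def by (simp add: convergent_LIMSEQ_iff)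
  have F0: "w i = 0 \<Longrightarrow> F i = 0" for i
  proof -
    assume "w i = 0"
    then have "(\<lambda>n. U n i) = (\<lambda>n. 0)" using wz by auto
    then show "F i = 0" using lim[of i] LIMSEQ_unique by (metis tendsto_const)
  qed
  have tail: "\<exists>N. \<forall>n\<ge>N. summable (\<lambda>i. (U n i - F i)^2 / w i) \<and> (\<Sum>i. (U n i - F i)^2 / w i) \<le> e"
    if e: "e > 0" for e
  proof -
    obtain N where N: "\<forall>m\<ge>N. \<forall>n\<ge>N. coef_ip \<phi> w (\<lambda>x. u m x - u n x) (\<lambda>x. u m x - u n x) < e"
      using cau e by blast
    show ?thesis
    proof (intro exI allI impI conjI)
      fix n assume n: "N \<le> n"
      have part: "(\<Sum>i<K. (U n i - F i)^2 / w i) \<le> e" for K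
      proof (rule LIMSEQ_le_const2)
        show "(\<lambda>m. \<Sum>i<K. (U n i - U m i)^2 / w i) \<longlonglongrightarrow> (\<Sum>i<K. (U n i - F i)^2 / w i)"
          by (intro tendsto_sum) (simp only: divide_inverse, intro tendsto_mult_right tendsto_power tendsto_diff tendsto_const lim)
        show "\<exists>M. \<forall>m\<ge>M. (\<Sum>i<K. (U n i - U m i)^2 / w i) \<le> e"
        proof (intro exI allI impI)
          fix m assume m: "N \<le> m"
          have "(\<Sum>i<K. (U n i - U m i)^2 / w i) \<le> (\<Sum>i. (U n i - U m i)^2 / w i)"
            using sum_le_suminf[OF sd, of "{..<K}"] nn by simp
          also have "\<dots> < e" using N n m unfolding ipd by blast
          finally show "(\<Sum>i<K. (U n i - U m i)^2 / w i) \<le> e" by simp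
        qed
      qed
      show s: "summable (\<lambda>i. (U n i - F i)^2 / w i)"
        by (rule summableI_nonneg_bounded[OF nn part])
      show "(\<Sum>i. (U n i - F i)^2 / w i) \<le> e" by (rule suminf_le_const[OF s part])
    qed
  qed
  obtain N1 where N1: "summable (\<lambda>i. (U N1 i - F i)^2 / w i)" using tail[of 1] by auto
  have sF: "summable (\<lambda>i. (F i)^2 / w i)"
  proof (rule summable_comparison_test)
    have "summable (\<lambda>i. (U N1 i)^2 / w i)" using coefD(3)[OF u[rule_format]] unfolding U_def .
    then show "summable (\<lambda>i. 2 * ((U N1 i - F i)^2 / w i) + 2 * ((U N1 i)^2 / w i))"
      using N1 by (intro summable_add summable_mult)
    show "\<exists>N. \<forall>i\<ge>N. norm ((F i)^2 / w i) \<le> 2 * ((U N1 i - F i)^2 / w i) + 2 * ((U N1 i)^2 / w i)"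
    proof (intro exI allI impI)
      fix i
      have eq: "2 * (U N1 i - F i)^2 + 2 * (U N1 i)^2 - (F i)^2 = (2 * U N1 i - F i)^2"
        by (simp add: power2_eq_square algebra_simps)
      have "0 \<le> (2 * U N1 i - F i)^2" by simp
      then have "(F i)^2 \<le> 2 * (U N1 i - F i)^2 + 2 * (U N1 i)^2" using eq by linarith
      then have "(F i)^2 / w i \<le> (2 * (U N1 i - F i)^2 + 2 * (U N1 i)^2) / w i"
        using w0[of i] by (intro divide_right_mono) auto
      then show "norm ((F i)^2 / w i) \<le> 2 * ((U N1 i - F i)^2 / w i) + 2 * ((U N1 i)^2 / w i)"
        using w0[of i] by (simp add: add_divide_distrib)
    qed
  qed
  interpret ex: expn \<phi> w F by (rule expnI[OF F0 sF])
  define f where "f x = (if x \<in> {0..1} then ex.F x else 0)" for x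
  have su: "(\<lambda>i. F i * \<phi> i x) sums f x" if "x \<in> {0..1}" for x
    using ex.pt_sums[OF that] that by (simp add: f_def)
  have fH: "f \<in> coef_space \<phi> w" by (rule coefI[OF F0 sF su]) (auto simp: f_def)
  have cof: "co f i = F i" for i by (rule coef_co[OF F0 sF su])
  have ipn: "coef_ip \<phi> w (\<lambda>x. u n x - f x) (\<lambda>x. u n x - f x) = (\<Sum>i. (U n i - F i)^2 / w i)" for n
    unfolding ip_self coef_diff(2)[OF u[rule_format] fH] U_def cof ..
  have "(\<lambda>n. coef_ip \<phi> w (\<lambda>x. u n x - f x) (\<lambda>x. u n x - f x)) \<longlonglongrightarrow> 0"
  proof (rule LIMSEQ_I)
    fix r :: real assume r: "0 < r"
    obtain N where N: "\<forall>n\<ge>N. summable (\<lambda>i. (U n i - F i)^2 / w i) \<and> (\<Sum>i. (U n i - F i)^2 / w i) \<le> r/2"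
      using tail[of "r/2"] r by auto
    show "\<exists>no. \<forall>n\<ge>no. norm (coef_ip \<phi> w (\<lambda>x. u n x - f x) (\<lambda>x. u n x - f x) - 0) < r"
    proof (intro exI allI impI)
      fix n assume n: "N \<le> n"
      have "0 \<le> (\<Sum>i. (U n i - F i)^2 / w i)" using N n nn by (intro suminf_nonneg) auto
      then show "norm (coef_ip \<phi> w (\<lambda>x. u n x - f x) (\<lambda>x. u n x - f x) - 0) < r"
        unfolding ipn using N n r by auto
    qed
  qed
  with fH show ?thesis by blast
qed

theorem rkhs: "is_rkhs {0..1} (mercer_kernel w \<phi>) (coef_space \<phi> w) (coef_ip \<phi> w)"
  unfolding is_rkhs_def
proof (intro conjI ballI allI impI)
  show "\<And>f x. f \<in> coef_space \<phi> w \<Longrightarrow> x \<notin> {0..1} \<Longrightarrow> f x = 0" using coefD(5) by blast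
  show "(\<lambda>_. 0) \<in> coef_space \<phi> w" by (rule coefI[where F="\<lambda>_. 0"]) auto
  show "\<And>f g a b. f \<in> coef_space \<phi> w \<Longrightarrow> g \<in> coef_space \<phi> w \<Longrightarrow> (\<lambda>x. a * f x + b * g x) \<in> coef_space \<phi> w"
    using coef_lin(1) by blast
  show "\<And>f g. coef_ip \<phi> w f g = coef_ip \<phi> w g f" by (rule ip_sym)
  show "\<And>f g h a b. f \<in> coef_space \<phi> w \<Longrightarrow> g \<in> coef_space \<phi> w \<Longrightarrow> h \<in> coef_space \<phi> w \<Longrightarrow>
      coef_ip \<phi> w (\<lambda>x. a * f x + b * g x) h = a * coef_ip \<phi> w f h + b * coef_ip \<phi> w g h"
    by (rule ip_lin)
  show "\<And>f. f \<in> coef_space \<phi> w \<Longrightarrow> 0 \<le> coef_ip \<phi> w f f" using ip_pos(1) by blast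
  show "\<And>f. f \<in> coef_space \<phi> w \<Longrightarrow> coef_ip \<phi> w f f = 0 \<Longrightarrow> f = (\<lambda>_. 0)" using ip_pos(2) by blast
  show "\<And>u. (\<forall>n. u n \<in> coef_space \<phi> w) \<and>
          (\<forall>e>0. \<exists>N. \<forall>m\<ge>N. \<forall>n\<ge>N. coef_ip \<phi> w (\<lambda>x. u m x - u n x) (\<lambda>x. u m x - u n x) < e) \<Longrightarrow>
          \<exists>f\<in>coef_space \<phi> w. (\<lambda>n. coef_ip \<phi> w (\<lambda>x. u n x - f x) (\<lambda>x. u n x - f x)) \<longlonglongrightarrow> 0"
    using complete_H by blast
  show "\<And>x. x \<in> {0..1} \<Longrightarrow> kernel_section {0..1} (mercer_kernel w \<phi>) x \<in> coef_space \<phi> w"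
    using ksec(1) by blast
  show "\<And>x f. x \<in> {0..1} \<Longrightarrow> f \<in> coef_space \<phi> w \<Longrightarrow>
      coef_ip \<phi> w f (kernel_section {0..1} (mercer_kernel w \<phi>) x) = f x"
    using reproducing by blast
qed

end



context onb begin

lemma ip_phi_bound: "g \<in> L2I \<Longrightarrow> (l2_ip (\<phi> i) g)^2 \<le> l2_ip g g"
  using l2_CS[OF phiL2 , of g i] by (simp add: norm1)

lemma bessel_part:
  assumes f: "f \<in> L2I"
  shows "(\<Sum>i<N. (l2_ip f (\<phi> i))^2) \<le> l2_ip f f"
proof -
  define c where "c i = l2_ip f (\<phi> i)" for i
  define h where "h = (\<lambda>x. \<Sum>i\<in>{..<N}. c i * \<phi> i x)"
  define X where "X = (\<Sum>i<N. (c i)^2)"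
  have hL: "h \<in> L2I" unfolding h_def by (rule L2I_sum) (rule phiL2)
  have hf: "l2_ip h f = X" unfolding h_def X_def
    by (simp add: l2_ip_sum[OF phiL2 f] c_def l2_ip_comm[of "\<phi> _" f] power2_eq_square)
  have hphi: "l2_ip h (\<phi> j) = c j" if "j < N" for j
  proof -
    have "l2_ip h (\<phi> j) = (\<Sum>i\<in>{..<N}. c i * l2_ip (\<phi> i) (\<phi> j))"
      unfolding h_def by (rule l2_ip_sum[OF phiL2 phiL2])
    also have "\<dots> = (\<Sum>i\<in>{..<N}. if i = j then c i else 0)" by (intro sum.cong) (auto simp: orth)
    also have "\<dots> = c j" using that by simp
    finally show ?thesis .
  qed
  have hh: "l2_ip h h = X"
  proof -
    have "l2_ip h h = (\<Sum>i\<in>{..<N}. c i * l2_ip (\<phi> i) h)"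
      by (subst (1) h_def) (rule l2_ip_sum[OF phiL2 hL])
    also have "\<dots> = (\<Sum>i\<in>{..<N}. c i * c i)"
      by (intro sum.cong) (auto simp: l2_ip_comm[of "\<phi> _" h] hphi)
    finally show ?thesis by (simp add: X_def power2_eq_square)
  qed
  have X0: "0 \<le> X" unfolding X_def by (intro sum_nonneg) auto
  have "X^2 \<le> X * l2_ip f f" using l2_CS[OF hL f] hf hh by simp
  then have "X \<le> l2_ip f f"
    using X0 by (cases "X = 0") (auto simp: power2_eq_square l2_ip_nonneg)
  then show ?thesis by (simp add: X_def c_def)
qed

lemma bessel:
  assumes f: "f \<in> L2I"
  shows "summable (\<lambda>i. (l2_ip f (\<phi> i))^2)" "(\<Sum>i. (l2_ip f (\<phi> i))^2) \<le> l2_ip f f"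
proof -
  show s: "summable (\<lambda>i. (l2_ip f (\<phi> i))^2)"
    by (rule summableI_nonneg_bounded[OF _ bessel_part[OF f]]) simp
  show "(\<Sum>i. (l2_ip f (\<phi> i))^2) \<le> l2_ip f f" by (rule suminf_le_const[OF s bessel_part[OF f]])
qed

end

context wsp begin

lemma K_expn: assumes g: "g \<in> L2I" shows "expn \<phi> w (\<lambda>i. w i * l2_ip (\<phi> i) g)"
proof (rule expnI)
  show "\<And>n. w n = 0 \<Longrightarrow> w n * l2_ip (\<phi> n) g = 0" by simp
  show "summable (\<lambda>n. (w n * l2_ip (\<phi> n) g)^2 / w n)"
  proof (rule summable_comparison_test)
    show "summable (\<lambda>n. w n * l2_ip g g)" using ws by (rule summable_mult2)
    show "\<exists>N. \<forall>n\<ge>N. norm ((w n * l2_ip (\<phi> n) g)^2 / w n) \<le> w n * l2_ip g g"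
    proof (intro exI allI impI)
      fix n
      have e: "(w n * l2_ip (\<phi> n) g)^2 / w n = w n * (l2_ip (\<phi> n) g)^2"
        using w0[of n] by (cases "w n = 0") (auto simp: power2_eq_square)
      show "norm ((w n * l2_ip (\<phi> n) g)^2 / w n) \<le> w n * l2_ip g g"
        unfolding e using ip_phi_bound[OF g, of n] w0[of n] by (simp add: mult_left_mono)
    qed
  qed
qed

lemma K_pt:
  assumes g: "g \<in> L2I" and x: "x \<in> {0..1}"
  shows "integral_op (mercer_kernel w \<phi>) g x = expn.F \<phi> (\<lambda>i. w i * l2_ip (\<phi> i) g) x"
proof -
  let ?c = "\<lambda>i. w i * \<phi> i x"
  have ex: "expn \<phi> w ?c"
  proof (rule expnI)
    show "summable (\<lambda>n. (w n * \<phi> n x)^2 / w n)"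
    proof -
      have "(w n * \<phi> n x)^2 / w n = w n * (\<phi> n x)^2" for n
        using w0[of n] by (cases "w n = 0") (auto simp: power2_eq_square)
      then show ?thesis using pw[OF x] by simp
    qed
  qed simp
  have "integral_op (mercer_kernel w \<phi>) g x = l2_ip (mercer_kernel w \<phi> x) g"
    by (simp add: integral_op_def l2_ip_def)
  also have "\<dots> = l2_ip (expn.F \<phi> ?c) g"
    by (rule l2_ip_cong_on) (simp add: expn.F_def[OF ex] mercer_kernel_def mult_ac)
  also have "\<dots> = (\<Sum>n. ?c n * l2_ip (\<phi> n) g)" by (rule expn.ip[OF ex g])
  also have "\<dots> = expn.F \<phi> (\<lambda>i. w i * l2_ip (\<phi> i) g) x"
    by (simp add: expn.F_def[OF K_expn[OF g]] mult_ac)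
  finally show ?thesis .
qed

lemma K_L2: assumes g: "g \<in> L2I" shows "integral_op (mercer_kernel w \<phi>) g \<in> L2I"
  using L2I_cong[OF expn.F_L2[OF K_expn[OF g]]] K_pt[OF g] by metis

lemma K_ip: assumes g: "g \<in> L2I" and h: "h \<in> L2I"
  shows "l2_ip (integral_op (mercer_kernel w \<phi>) g) h = (\<Sum>i. w i * l2_ip (\<phi> i) g * l2_ip (\<phi> i) h)"
proof -
  have "l2_ip (integral_op (mercer_kernel w \<phi>) g) h = l2_ip (expn.F \<phi> (\<lambda>i. w i * l2_ip (\<phi> i) g)) h"
    by (rule l2_ip_cong_on) (simp add: K_pt[OF g])
  also have "\<dots> = (\<Sum>i. w i * l2_ip (\<phi> i) g * l2_ip (\<phi> i) h)" by (rule expn.ip[OF K_expn[OF g] h])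
  finally show ?thesis .
qed

end



context wsp begin

definition S0 where "S0 f = expn.F \<phi> (\<lambda>i. sqrt (w i) * l2_ip (\<phi> i) f)"

lemma S_expn: assumes f: "f \<in> L2I" shows "expn \<phi> w (\<lambda>i. sqrt (w i) * l2_ip (\<phi> i) f)"
proof (rule expnI)
  show "\<And>n. w n = 0 \<Longrightarrow> sqrt (w n) * l2_ip (\<phi> n) f = 0" by simp
  show "summable (\<lambda>n. (sqrt (w n) * l2_ip (\<phi> n) f)^2 / w n)"
  proof (rule summable_comparison_test)
    show "summable (\<lambda>n. (l2_ip f (\<phi> n))^2)" by (rule bessel(1)[OF f])
    show "\<exists>N. \<forall>n\<ge>N. norm ((sqrt (w n) * l2_ip (\<phi> n) f)^2 / w n) \<le> (l2_ip f (\<phi> n))^2"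
    proof (intro exI allI impI)
      fix n
      show "norm ((sqrt (w n) * l2_ip (\<phi> n) f)^2 / w n) \<le> (l2_ip f (\<phi> n))^2"
        using w0[of n] by (cases "w n = 0") (auto simp: power_mult_distrib l2_ip_comm)
    qed
  qed
qed

lemma S0_L2: "f \<in> L2I \<Longrightarrow> S0 f \<in> L2I"
  unfolding S0_def by (rule expn.F_L2[OF S_expn])

lemma S0_co: "f \<in> L2I \<Longrightarrow> l2_ip (\<phi> j) (S0 f) = sqrt (w j) * l2_ip (\<phi> j) f"
  unfolding S0_def using coef_extract[OF S_expn] by (simp add: l2_ip_comm)

lemma S0_ip: "f \<in> L2I \<Longrightarrow> g \<in> L2I \<Longrightarrow> l2_ip (S0 f) g = (\<Sum>n. sqrt (w n) * l2_ip (\<phi> n) f * l2_ip (\<phi> n) g)"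
  unfolding S0_def by (rule expn.ip[OF S_expn])

lemma S0_ip_summable: "f \<in> L2I \<Longrightarrow> g \<in> L2I \<Longrightarrow> summable (\<lambda>n. sqrt (w n) * l2_ip (\<phi> n) f * l2_ip (\<phi> n) g)"
  unfolding S0_def by (rule expn.ip_summable[OF S_expn])

lemma S0_pt: "f \<in> L2I \<Longrightarrow> x \<in> {0..1} \<Longrightarrow> (\<lambda>i. sqrt (w i) * l2_ip (\<phi> i) f * \<phi> i x) sums S0 f x"
  unfolding S0_def by (rule expn.pt_sums[OF S_expn])

lemma S0_sqrt: "l2_sqrt_of (integral_op (mercer_kernel w \<phi>)) S0"
  unfolding l2_sqrt_of_def l2_operator_def
proof (intro conjI ballI allI impI)
  show "\<And>f. f \<in> L2I \<Longrightarrow> S0 f \<in> L2I" by (rule S0_L2)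
  show "l2_eq (S0 f) (S0 g)" if f: "f \<in> L2I" and g: "g \<in> L2I" and e: "l2_eq f g" for f g
  proof -
    have "l2_ip (\<phi> i) f = l2_ip (\<phi> i) g" for i
      using l2_ip_cong_AE_meas[OF e f g phiL2] by (simp add: l2_ip_comm)
    then have "S0 f = S0 g" unfolding S0_def by simp
    then show ?thesis by (simp add: l2_eq_def)
  qed
  show "l2_eq (S0 (\<lambda>x. a * f x + b * g x)) (\<lambda>x. a * S0 f x + b * S0 g x)"
    if f: "f \<in> L2I" and g: "g \<in> L2I" for f g a b
  proof -
    have hL: "(\<lambda>x. a * f x + b * g x) \<in> L2I" by (rule L2I_lin[OF f g])
    have c: "l2_ip (\<phi> i) (\<lambda>x. a * f x + b * g x) = a * l2_ip (\<phi> i) f + b * l2_ip (\<phi> i) g" for i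
      by (rule l2_ip_lin2[OF f g phiL2])
    have "S0 (\<lambda>x. a * f x + b * g x) x = a * S0 f x + b * S0 g x" if x: "x \<in> {0..1}" for x
    proof -
      have "(\<lambda>i. a * (sqrt (w i) * l2_ip (\<phi> i) f * \<phi> i x) + b * (sqrt (w i) * l2_ip (\<phi> i) g * \<phi> i x))
            sums (a * S0 f x + b * S0 g x)"
        by (intro sums_add sums_mult S0_pt f g x)
      then have "(\<lambda>i. sqrt (w i) * l2_ip (\<phi> i) (\<lambda>x. a * f x + b * g x) * \<phi> i x) sums (a * S0 f x + b * S0 g x)"
        unfolding c by (simp add: algebra_simps)
      then show ?thesis using S0_pt[OF hL x] sums_unique2 by blast
    qed
    then show ?thesis unfolding l2_eq_iff by (intro AE_I2) simp
  qed
  define W where "W = (\<Sum>n. w n)"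
  show "\<exists>K. \<forall>f\<in>L2I. l2_ip (S0 f) (S0 f) \<le> K * l2_ip f f"
  proof (intro exI ballI)
    fix f assume f: "f \<in> L2I"
    have "l2_ip (S0 f) (S0 f) = (\<Sum>n. sqrt (w n) * l2_ip (\<phi> n) f * l2_ip (\<phi> n) (S0 f))"
      by (rule S0_ip[OF f S0_L2[OF f]])
    also have "\<dots> = (\<Sum>n. w n * (l2_ip f (\<phi> n))^2)"
      by (intro suminf_cong) (simp add: S0_co[OF f] w0 power2_eq_square l2_ip_comm)
    also have "\<dots> \<le> (\<Sum>n. W * (l2_ip f (\<phi> n))^2)"
    proof (rule suminf_le)
      show "w n * (l2_ip f (\<phi> n))^2 \<le> W * (l2_ip f (\<phi> n))^2" for n
        unfolding W_def using sum_le_suminf[OF ws, of "{n}"] w0 by (intro mult_right_mono) auto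
      show "summable (\<lambda>n. W * (l2_ip f (\<phi> n))^2)" using bessel(1)[OF f] by (rule summable_mult)
      show "summable (\<lambda>n. w n * (l2_ip f (\<phi> n))^2)"
      proof (rule summable_comparison_test)
        show "summable (\<lambda>n. W * (l2_ip f (\<phi> n))^2)" using bessel(1)[OF f] by (rule summable_mult)
        show "\<exists>N. \<forall>n\<ge>N. norm (w n * (l2_ip f (\<phi> n))^2) \<le> W * (l2_ip f (\<phi> n))^2"
          unfolding W_def using sum_le_suminf[OF ws, of "{_}"] w0
          by (intro exI allI impI) (auto intro!: mult_right_mono simp: abs_mult)
      qed
    qed
    also have "\<dots> = W * (\<Sum>n. (l2_ip f (\<phi> n))^2)" using bessel(1)[OF f] by (simp add: suminf_mult)
    also have "\<dots> \<le> W * l2_ip f f"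
    proof (rule mult_left_mono)
      show "0 \<le> W" unfolding W_def using ws w0 by (simp add: suminf_nonneg)
    qed (rule bessel(2)[OF f])
    finally show "l2_ip (S0 f) (S0 f) \<le> W * l2_ip f f" .
  qed
  show "l2_ip (S0 f) g = l2_ip f (S0 g)" if f: "f \<in> L2I" and g: "g \<in> L2I" for f g
    using S0_ip[OF f g] S0_ip[OF g f] by (simp add: l2_ip_comm[of f] mult_ac)
  show "0 \<le> l2_ip (S0 f) f" if f: "f \<in> L2I" for f
    unfolding S0_ip[OF f f] using S0_ip_summable[OF f f]
    by (intro suminf_nonneg) (auto simp: mult.assoc w0)
  show "l2_eq (S0 (S0 f)) (integral_op (mercer_kernel w \<phi>) f)" if f: "f \<in> L2I" for f
  proof -
    have "(\<lambda>i. sqrt (w i) * l2_ip (\<phi> i) (S0 f)) = (\<lambda>i. w i * l2_ip (\<phi> i) f)"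
      by (rule ext) (simp add: S0_co[OF f] w0 mult.assoc[symmetric])
    then have "S0 (S0 f) x = integral_op (mercer_kernel w \<phi>) f x" if "x \<in> {0..1}" for x
      unfolding S0_def K_pt[OF f that] by simp
    then show ?thesis unfolding l2_eq_iff by (intro AE_I2) simp
  qed
qed

lemma sqrt_exists: "l2_sqrt_of (integral_op (mercer_kernel w \<phi>)) (l2_sqrt (integral_op (mercer_kernel w \<phi>)))"
  unfolding l2_sqrt_def by (rule someI[where P="l2_sqrt_of (integral_op (mercer_kernel w \<phi>))", OF S0_sqrt])

end



context wsp begin

lemma key:
  assumes S: "l2_sqrt_of (integral_op (mercer_kernel w \<phi>)) S" and f: "f \<in> L2I"
  shows "(\<Sum>j<N. d j * l2_ip (S f) (\<phi> j))^2 \<le> l2_ip f f * (\<Sum>j<N. w j * (d j)^2)"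
proof -
  let ?T = "integral_op (mercer_kernel w \<phi>)"
  have SL: "\<And>g. g \<in> L2I \<Longrightarrow> S g \<in> L2I" using S unfolding l2_sqrt_of_def l2_operator_def by blast
  have Ssym: "\<And>g h. g \<in> L2I \<Longrightarrow> h \<in> L2I \<Longrightarrow> l2_ip (S g) h = l2_ip g (S h)"
    using S unfolding l2_sqrt_of_def by blast
  have SS: "\<And>g. g \<in> L2I \<Longrightarrow> l2_eq (S (S g)) (?T g)" using S unfolding l2_sqrt_of_def by blast
  define v where "v = (\<lambda>x. \<Sum>j\<in>{..<N}. d j * \<phi> j x)"
  have vL: "v \<in> L2I" unfolding v_def by (rule L2I_sum) (rule phiL2)
  have "l2_ip (S f) v = l2_ip v (S f)" by (rule l2_ip_comm)
  also have "\<dots> = (\<Sum>j<N. d j * l2_ip (\<phi> j) (S f))" unfolding v_def by (rule l2_ip_sum[OF phiL2 SL[OF f]])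
  finally have e1: "l2_ip (S f) v = (\<Sum>j<N. d j * l2_ip (S f) (\<phi> j))" by (simp add: l2_ip_comm)
  have vphi: "l2_ip (\<phi> i) v = (if i < N then d i else 0)" for i
  proof -
    have "l2_ip (\<phi> i) v = l2_ip v (\<phi> i)" by (rule l2_ip_comm)
    also have "\<dots> = (\<Sum>j\<in>{..<N}. d j * l2_ip (\<phi> j) (\<phi> i))" unfolding v_def by (rule l2_ip_sum[OF phiL2 phiL2])
    also have "\<dots> = (\<Sum>j\<in>{..<N}. if j = i then d j else 0)" by (intro sum.cong) (auto simp: orth)
    also have "\<dots> = (if i < N then d i else 0)" by simp
    finally show ?thesis .
  qed
  have "l2_ip (S v) (S v) = l2_ip v (S (S v))" by (rule Ssym[OF vL SL[OF vL]])
  also have "\<dots> = l2_ip (S (S v)) v" by (rule l2_ip_comm)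
  also have "\<dots> = l2_ip (?T v) v" by (rule l2_ip_cong_AE_meas[OF SS[OF vL] SL[OF SL[OF vL]] K_L2[OF vL] vL])
  also have "\<dots> = (\<Sum>i. w i * l2_ip (\<phi> i) v * l2_ip (\<phi> i) v)" by (rule K_ip[OF vL vL])
  also have "\<dots> = (\<Sum>i. if i \<in> {..<N} then w i * (d i)^2 else 0)"
    by (intro suminf_cong) (simp add: vphi power2_eq_square)
  also have "\<dots> = (\<Sum>i<N. w i * (d i)^2)" by (subst suminf_finite[of "{..<N}"]) auto
  finally have e2: "l2_ip (S v) (S v) = (\<Sum>i<N. w i * (d i)^2)" .
  have "(l2_ip (S f) v)^2 = (l2_ip f (S v))^2" by (simp add: Ssym[OF f vL])
  also have "\<dots> \<le> l2_ip f f * l2_ip (S v) (S v)" by (rule l2_CS[OF f SL[OF vL]])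
  finally show ?thesis unfolding e1 e2 .
qed

lemma key_zero:
  assumes S: "l2_sqrt_of (integral_op (mercer_kernel w \<phi>)) S" and f: "f \<in> L2I" and wj: "w j = 0"
  shows "l2_ip (S f) (\<phi> j) = 0"
proof -
  let ?d = "\<lambda>i. if i = j then 1 else (0::real)"
  have "(\<Sum>i<Suc j. ?d i * l2_ip (S f) (\<phi> i))^2 \<le> l2_ip f f * (\<Sum>i<Suc j. w i * (?d i)^2)"
    by (rule key[OF S f])
  moreover have "(\<Sum>i<Suc j. ?d i * l2_ip (S f) (\<phi> i)) = l2_ip (S f) (\<phi> j)"
    by (simp add: if_distrib cong: if_cong)
  moreover have "(\<Sum>i<Suc j. w i * (?d i)^2) = w j"
    by (simp add: if_distrib cong: if_cong)
  ultimately show ?thesis using wj by simp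
qed

lemma key_sum:
  assumes S: "l2_sqrt_of (integral_op (mercer_kernel w \<phi>)) S" and f: "f \<in> L2I"
  shows "summable (\<lambda>j. (l2_ip (S f) (\<phi> j))^2 / w j)"
    "(\<Sum>j. (l2_ip (S f) (\<phi> j))^2 / w j) \<le> l2_ip f f"
proof -
  let ?u = "\<lambda>j. l2_ip (S f) (\<phi> j)"
  have part: "(\<Sum>j<N. (?u j)^2 / w j) \<le> l2_ip f f" for N
  proof -
    define X where "X = (\<Sum>j<N. (?u j)^2 / w j)"
    have a1: "(\<Sum>j<N. (?u j / w j) * ?u j) = X" unfolding X_def by (simp add: power2_eq_square)
    have a2: "(\<Sum>j<N. w j * (?u j / w j)^2) = X" unfolding X_def
      by (intro sum.cong refl) (auto simp: power2_eq_square)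
    have "X^2 \<le> l2_ip f f * X" using key[OF S f, where N=N and d="\<lambda>j. ?u j / w j"] a1 a2 by simp
    moreover have "0 \<le> X" unfolding X_def using w0 by (intro sum_nonneg) auto
    ultimately have "X \<le> l2_ip f f"
      by (cases "X = 0") (auto simp: power2_eq_square l2_ip_nonneg)
    then show ?thesis unfolding X_def .
  qed
  have nn: "0 \<le> (?u j)^2 / w j" for j using w0[of j] by simp
  show s: "summable (\<lambda>j. (?u j)^2 / w j)" by (rule summableI_nonneg_bounded[OF nn part])
  show "(\<Sum>j. (?u j)^2 / w j) \<le> l2_ip f f" by (rule suminf_le_const[OF s part])
qed

lemma key_expn:
  assumes S: "l2_sqrt_of (integral_op (mercer_kernel w \<phi>)) S" and f: "f \<in> L2I"
  shows "expn \<phi> w (\<lambda>j. l2_ip (S f) (\<phi> j))"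
  by (rule expnI) (use key_zero[OF S f] key_sum(1)[OF S f] in auto)

lemma key_ae:
  assumes S: "l2_sqrt_of (integral_op (mercer_kernel w \<phi>)) S" and f: "f \<in> L2I"
  shows "l2_eq (S f) (expn.F \<phi> (\<lambda>j. l2_ip (S f) (\<phi> j)))"
proof -
  let ?W = "expn.F \<phi> (\<lambda>j. l2_ip (S f) (\<phi> j))"
  have SL: "S f \<in> L2I" using S f unfolding l2_sqrt_of_def l2_operator_def by blast
  have WL: "?W \<in> L2I" by (rule expn.F_L2[OF key_expn[OF S f]])
  have "l2_eq (\<lambda>x. S f x - ?W x) (\<lambda>_. 0)"
  proof (rule complete)
    show "(\<lambda>x. S f x - ?W x) \<in> L2I" by (rule L2I_diff[OF SL WL])
    show "l2_ip (\<lambda>x. S f x - ?W x) (\<phi> i) = 0" for i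
      using l2_ip_diff[OF SL WL phiL2, of i] coef_extract[OF key_expn[OF S f], of i] by simp
  qed
  then show ?thesis unfolding l2_eq_def by (auto elim!: eventually_mono)
qed

end



locale main = P: wsp \<phi> a + Q: wsp \<psi> b
  for \<phi> \<psi> :: "nat \<Rightarrow> real \<Rightarrow> real" and a b :: "nat \<Rightarrow> real" +
  assumes tau_bdd: "bdd_above (range (tau a b \<psi> \<phi>))"
begin

abbreviation "th \<equiv> theta \<psi> \<phi>"
abbreviation "et \<equiv> eta b \<psi> \<phi>"
abbreviation "ta \<equiv> tau a b \<psi> \<phi>"

lemma theta_abs: "\<bar>th m i\<bar> \<le> 1"
proof -
  have "(th m i)^2 \<le> 1" using l2_CS[OF Q.phiL2 P.phiL2, of m i] by (simp add: theta_def Q.norm1 P.norm1)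
  then show ?thesis by (simp add: abs_square_le_1)
qed

lemma eta_abs_summable: "summable (\<lambda>m. \<bar>b m * th m i * th m j\<bar>)"
proof (rule summable_comparison_test)
  show "summable b" by (rule Q.ws)
  show "\<exists>N. \<forall>n\<ge>N. norm \<bar>b n * th n i * th n j\<bar> \<le> b n"
  proof (intro exI allI impI)
    fix n
    have "\<bar>th n i\<bar> * \<bar>th n j\<bar> \<le> 1 * 1" using theta_abs by (intro mult_mono) auto
    then have "b n * (\<bar>th n i\<bar> * \<bar>th n j\<bar>) \<le> b n * 1" using Q.w0[of n] by (intro mult_left_mono) auto
    then show "norm \<bar>b n * th n i * th n j\<bar> \<le> b n" using Q.w0[of n] by (simp add: abs_mult mult.assoc)
  qed
qed

lemma eta_bound: "\<bar>et i j\<bar> \<le> (\<Sum>m. b m)"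
proof -
  have "\<bar>et i j\<bar> \<le> (\<Sum>m. \<bar>b m * th m i * th m j\<bar>)" unfolding eta_def by (rule summable_rabs[OF eta_abs_summable])
  also have "\<dots> \<le> (\<Sum>m. b m)"
  proof (rule suminf_le[OF _ eta_abs_summable Q.ws])
    fix n
    have "\<bar>th n i\<bar> * \<bar>th n j\<bar> \<le> 1 * 1" using theta_abs by (intro mult_mono) auto
    then have "b n * (\<bar>th n i\<bar> * \<bar>th n j\<bar>) \<le> b n * 1" using Q.w0[of n] by (intro mult_left_mono) auto
    then show "\<bar>b n * th n i * th n j\<bar> \<le> b n" using Q.w0[of n] by (simp add: abs_mult mult.assoc)
  qed
  finally show ?thesis .
qed

lemma eta_sym: "et i j = et j i" unfolding eta_def by (simp add: mult_ac)

lemma tau_summable: "summable (\<lambda>j. a j * (et i j)^2)"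
proof (rule summable_comparison_test)
  show "summable (\<lambda>j. a j * (\<Sum>m. b m)^2)" using P.ws by (rule summable_mult2)
  show "\<exists>N. \<forall>j\<ge>N. norm (a j * (et i j)^2) \<le> a j * (\<Sum>m. b m)^2"
  proof (intro exI allI impI)
    fix j
    have "(et i j)^2 \<le> (\<Sum>m. b m)^2"
      using eta_bound[of i j] by (metis abs_ge_zero power2_abs power_mono)
    then show "norm (a j * (et i j)^2) \<le> a j * (\<Sum>m. b m)^2" using P.w0[of j] by (simp add: mult_left_mono)
  qed
qed

lemma tau_eq: "ta i = (\<Sum>j. a j * (et i j)^2)"
  unfolding tau_def using eta_sym by simp

lemma tau_nonneg: "0 \<le> ta i"
  unfolding tau_eq using tau_summable P.w0 by (intro suminf_nonneg) auto

lemma tau_M: obtains M where "M \<ge> 0" "\<And>i. ta i \<le> M"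
proof -
  obtain M where M: "\<And>i. ta i \<le> M" using tau_bdd unfolding bdd_above_def by auto
  moreover have "M \<ge> 0" using M[of 0] tau_nonneg[of 0] by simp
  ultimately show ?thesis using that by blast
qed

lemma R_wsp: "wsp \<phi> (\<lambda>i. a i * ta i)"
proof -
  obtain M where M0: "M \<ge> 0" and M: "\<And>i. ta i \<le> M" using tau_M by blast
  show ?thesis
  proof (unfold_locales)
    show "0 \<le> a n * ta n" for n using P.w0 tau_nonneg by simp
    show "summable (\<lambda>n. a n * ta n)"
    proof (rule summable_comparison_test)
      show "summable (\<lambda>n. M * a n)" using P.ws by (rule summable_mult)
      show "\<exists>N. \<forall>n\<ge>N. norm (a n * ta n) \<le> M * a n"
      proof (intro exI allI impI)
        fix n
        have "a n * ta n \<le> a n * M" using P.w0[of n] M[of n] by (intro mult_left_mono) auto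
        then show "norm (a n * ta n) \<le> M * a n" using P.w0[of n] tau_nonneg[of n] by (simp add: mult.commute)
      qed
    qed
    show "summable (\<lambda>n. a n * ta n * (\<phi> n x)^2)" if x: "x \<in> {0..1}" for x
    proof (rule summable_comparison_test)
      show "summable (\<lambda>n. M * (a n * (\<phi> n x)^2))" using P.pw[OF x] by (rule summable_mult)
      show "\<exists>N. \<forall>n\<ge>N. norm (a n * ta n * (\<phi> n x)^2) \<le> M * (a n * (\<phi> n x)^2)"
      proof (intro exI allI impI)
        fix n
        have "ta n * (a n * (\<phi> n x)^2) \<le> M * (a n * (\<phi> n x)^2)"
          using M[of n] P.w0[of n] by (intro mult_right_mono) auto
        then show "norm (a n * ta n * (\<phi> n x)^2) \<le> M * (a n * (\<phi> n x)^2)"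
          using P.w0[of n] tau_nonneg[of n] by (simp add: mult_ac)
      qed
    qed
  qed
qed

lemma subset: "coef_space \<phi> (\<lambda>i. a i * ta i) \<subseteq> coef_space \<phi> a"
proof
  obtain M where M0: "M \<ge> 0" and M: "\<And>i. ta i \<le> M" using tau_M by blast
  fix f assume "f \<in> coef_space \<phi> (\<lambda>i. a i * ta i)"
  then obtain F where F0: "\<And>i. a i * ta i = 0 \<Longrightarrow> F i = 0" and sF: "summable (\<lambda>i. (F i)^2 / (a i * ta i))"
    and su: "\<forall>x\<in>{0..1}. (\<lambda>i. F i * \<phi> i x) sums f x" and out: "\<forall>x. x \<notin> {0..1} \<longrightarrow> f x = 0"
    unfolding coef_space_def by blast
  show "f \<in> coef_space \<phi> a" unfolding coef_space_def
  proof (intro CollectI exI conjI)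
    show "\<forall>i. a i = 0 \<longrightarrow> F i = 0" using F0 by simp
    show "summable (\<lambda>i. (F i)^2 / a i)"
    proof (rule summable_comparison_test)
      show "summable (\<lambda>i. M * ((F i)^2 / (a i * ta i)))" using sF by (rule summable_mult)
      show "\<exists>N. \<forall>n\<ge>N. norm ((F n)^2 / a n) \<le> M * ((F n)^2 / (a n * ta n))"
      proof (intro exI allI impI)
        fix n
        show "norm ((F n)^2 / a n) \<le> M * ((F n)^2 / (a n * ta n))"
        proof (cases "a n * ta n = 0")
          case True then show ?thesis using F0 by simp
        next
          case False
          then have ap: "a n > 0" and tp: "ta n > 0" using P.w0[of n] tau_nonneg[of n]
            by (auto simp: less_le)
          have "(F n)^2 / a n = ta n * ((F n)^2 / (a n * ta n))" using ap tp by (simp add: field_simps)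
          also have "\<dots> \<le> M * ((F n)^2 / (a n * ta n))" using M[of n] ap tp by (intro mult_right_mono) auto
          finally show ?thesis using ap by simp
        qed
      qed
    qed
  qed (use su out in auto)
qed

end



context main begin

lemma range_main:
  "l2_range_subset
     (\<lambda>f. l2_sqrt (integral_op (mercer_kernel a \<phi>))
            (l2_sqrt (integral_op (mercer_kernel a \<phi>))
               (cov_op (mercer_kernel b \<psi>)
                  (l2_sqrt (integral_op (mercer_kernel a \<phi>)) f))))
     (coef_space \<phi> (\<lambda>i. a i * ta i))"
  unfolding l2_range_subset_def
proof
  fix f assume f: "f \<in> L2I"
  define T where "T = integral_op (mercer_kernel a \<phi>)"
  define S where "S = l2_sqrt T"
  have S: "l2_sqrt_of T S" unfolding S_def T_def by (rule P.sqrt_exists)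
  have SL: "\<And>g. g \<in> L2I \<Longrightarrow> S g \<in> L2I" using S unfolding l2_sqrt_of_def l2_operator_def by blast
  have SS: "\<And>g. g \<in> L2I \<Longrightarrow> l2_eq (S (S g)) (T g)" using S unfolding l2_sqrt_of_def by blast
  define u where "u = S f"
  have uL: "u \<in> L2I" unfolding u_def by (rule SL[OF f])
  define uc where "uc j = l2_ip u (\<phi> j)" for j
  have ex_u: "expn \<phi> a uc" unfolding uc_def u_def using P.key_expn[OF S[unfolded T_def] f] .
  define W where "W = expn.F \<phi> uc"
  have WL: "W \<in> L2I" unfolding W_def by (rule expn.F_L2[OF ex_u])
  have uW: "l2_eq u W" unfolding W_def uc_def u_def using P.key_ae[OF S[unfolded T_def] f] .
  define U where "U = (\<Sum>j. (uc j)^2 / a j)"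
  have sU: "summable (\<lambda>j. (uc j)^2 / a j)" unfolding uc_def u_def using P.key_sum(1)[OF S[unfolded T_def] f] .
  have uc0: "\<And>j. a j = 0 \<Longrightarrow> uc j = 0" unfolding uc_def u_def using P.key_zero[OF S[unfolded T_def] f] .
  define g where "g = cov_op (mercer_kernel b \<psi>) u"
  have g_eq: "g = integral_op (mercer_kernel b \<psi>) u" unfolding g_def cov_op_def ..
  have gL: "g \<in> L2I" unfolding g_eq by (rule Q.K_L2[OF uL])
  define gc where "gc i = l2_ip g (\<phi> i)" for i
  have gc_eq: "gc i = (\<Sum>j. uc j * et i j)" for i
  proof -
    let ?c = "\<lambda>m. b m * th m i"
    have ex_v: "expn \<psi> b ?c"
    proof (rule Q.expnI)
      show "summable (\<lambda>n. (b n * th n i)^2 / b n)"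
      proof (rule summable_comparison_test)
        show "summable b" by (rule Q.ws)
        show "\<exists>N. \<forall>n\<ge>N. norm ((b n * th n i)^2 / b n) \<le> b n"
        proof (intro exI allI impI)
          fix n
          have e: "(b n * th n i)^2 / b n = b n * (th n i)^2"
            using Q.w0[of n] by (cases "b n = 0") (auto simp: power2_eq_square)
          have "(th n i)^2 \<le> 1" using theta_abs[of n i] by (simp add: abs_square_le_1)
          then have "b n * (th n i)^2 \<le> b n * 1" using Q.w0[of n] by (intro mult_left_mono) auto
          then show "norm ((b n * th n i)^2 / b n) \<le> b n" unfolding e using Q.w0[of n] by simp
        qed
      qed
    qed simp
    define v where "v = expn.F \<psi> ?c"
    have vL: "v \<in> L2I" unfolding v_def by (rule expn.F_L2[OF ex_v])
    have "gc i = (\<Sum>m. b m * l2_ip (\<psi> m) u * l2_ip (\<psi> m) (\<phi> i))"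
      unfolding gc_def g_eq by (rule Q.K_ip[OF uL P.phiL2])
    also have "\<dots> = (\<Sum>m. ?c m * l2_ip (\<psi> m) u)" by (intro suminf_cong) (simp add: theta_def mult_ac)
    also have "\<dots> = l2_ip v u" unfolding v_def by (rule expn.ip[OF ex_v uL, symmetric])
    also have "\<dots> = l2_ip u v" by (rule l2_ip_comm)
    also have "\<dots> = l2_ip W v" by (rule l2_ip_cong_AE_meas[OF uW uL WL vL])
    also have "\<dots> = (\<Sum>j. uc j * l2_ip (\<phi> j) v)" unfolding W_def by (rule expn.ip[OF ex_u vL])
    also have "\<dots> = (\<Sum>j. uc j * et i j)"
    proof (intro suminf_cong)
      fix j
      have "l2_ip (\<phi> j) v = l2_ip v (\<phi> j)" by (rule l2_ip_comm)
      also have "\<dots> = (\<Sum>m. ?c m * l2_ip (\<psi> m) (\<phi> j))" unfolding v_def by (rule expn.ip[OF ex_v P.phiL2])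
      also have "\<dots> = et i j" unfolding eta_def theta_def by (simp add: mult_ac)
      finally show "uc j * l2_ip (\<phi> j) v = uc j * et i j" by simp
    qed
    finally show ?thesis .
  qed
  have gc_bound: "(gc i)^2 \<le> U * ta i" for i
  proof -
    have "(\<Sum>j. uc j * et i j)^2 \<le> (\<Sum>j. (uc j)^2 / a j) * (\<Sum>j. a j * (et i j)^2)"
      by (rule WCS(3)[OF P.w0 uc0 sU tau_summable])
    then show ?thesis unfolding gc_eq U_def tau_eq .
  qed
  have U0: "0 \<le> U" unfolding U_def using sU P.w0 by (intro suminf_nonneg) auto
  define Fc where "Fc i = a i * l2_ip (\<phi> i) g" for i
  have Fc_gc: "Fc i = a i * gc i" for i by (simp add: Fc_def gc_def l2_ip_comm)
  have ex_T: "expn \<phi> a Fc" unfolding Fc_def by (rule P.K_expn[OF gL])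
  define h where "h x = (if x \<in> {0..1} then expn.F \<phi> Fc x else 0)" for x
  interpret R: wsp \<phi> "\<lambda>i. a i * ta i" by (rule R_wsp)
  have hR: "h \<in> coef_space \<phi> (\<lambda>i. a i * ta i)"
  proof (rule R.coefI[where F=Fc])
    show "Fc i = 0" if "a i * ta i = 0" for i
    proof (cases "a i = 0")
      case False
      then have "ta i = 0" using that by simp
      then have "(gc i)^2 \<le> 0" using gc_bound[of i] by simp
      then show ?thesis by (simp add: Fc_gc)
    qed (simp add: Fc_gc)
    show "summable (\<lambda>i. (Fc i)^2 / (a i * ta i))"
    proof (rule summable_comparison_test)
      show "summable (\<lambda>i. U * a i)" using P.ws by (rule summable_mult)
      show "\<exists>N. \<forall>n\<ge>N. norm ((Fc n)^2 / (a n * ta n)) \<le> U * a n"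
      proof (intro exI allI impI)
        fix n
        show "norm ((Fc n)^2 / (a n * ta n)) \<le> U * a n"
        proof (cases "a n * ta n = 0")
          case True
          show ?thesis unfolding True using U0 P.w0[of n] by simp
        next
          case False
          then have ap: "a n > 0" and tp: "ta n > 0" using P.w0[of n] tau_nonneg[of n]
            by (auto simp: less_le)
          have "(Fc n)^2 / (a n * ta n) = a n * ((gc n)^2 / ta n)"
            using ap tp by (simp add: Fc_gc power2_eq_square field_simps)
          also have "\<dots> \<le> a n * U"
          proof (rule mult_left_mono)
            show "(gc n)^2 / ta n \<le> U" using gc_bound[of n] tp by (simp add: divide_le_eq mult.commute)
          qed (use ap in simp)
          finally show ?thesis using ap tp by (simp add: mult.commute)
        qed
      qed
    qed
    show "(\<lambda>i. Fc i * \<phi> i x) sums h x" if "x \<in> {0..1}" for x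
      using expn.pt_sums[OF ex_T that] that by (simp add: h_def)
    show "h x = 0" if "x \<notin> {0..1}" for x using that by (auto simp: h_def)
  qed
  have "l2_eq (S (S g)) h"
  proof -
    have "l2_eq (S (S g)) (T g)" by (rule SS[OF gL])
    moreover have "T g x = h x" if "x \<in> {0..1}" for x
      unfolding T_def h_def Fc_def using P.K_pt[OF gL that] that by simp
    ultimately show ?thesis unfolding l2_eq_def by (auto elim!: eventually_mono)
  qed
  then show "\<exists>h'\<in>coef_space \<phi> (\<lambda>i. a i * ta i).
      l2_eq (l2_sqrt (integral_op (mercer_kernel a \<phi>)) (l2_sqrt (integral_op (mercer_kernel a \<phi>))
         (cov_op (mercer_kernel b \<psi>) (l2_sqrt (integral_op (mercer_kernel a \<phi>)) f)))) h'"
    using hR unfolding g_def u_def S_def T_def by blast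
qed

end


theorem proposition1:
  fixes a b :: "nat \<Rightarrow> real" and \<phi> \<psi> :: "nat \<Rightarrow> real \<Rightarrow> real"
  assumes a_nonneg: "\<forall>i. 0 \<le> a i" and b_nonneg: "\<forall>m. 0 \<le> b m"
    and a_sum: "summable a" and b_sum: "summable b"
    and phi_onb: "orthonormal_basis_L2 \<phi>" and psi_onb: "orthonormal_basis_L2 \<psi>"
    and k_def: "\<forall>x\<in>{0..1}. \<forall>y\<in>{0..1}. summable (\<lambda>i. a i * \<phi> i x * \<phi> i y)"
    and c_def: "\<forall>x\<in>{0..1}. \<forall>y\<in>{0..1}. summable (\<lambda>m. b m * \<psi> m x * \<psi> m y)"
    and tau_bdd: "bdd_above (range (tau a b \<psi> \<phi>))"
  shows "is_rkhs {0..1} (mercer_kernel a \<phi>) (coef_space \<phi> a) (coef_ip \<phi> a) \<and>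
         l2_range_subset
           (\<lambda>f. l2_sqrt (integral_op (mercer_kernel a \<phi>))
                  (l2_sqrt (integral_op (mercer_kernel a \<phi>))
                     (cov_op (mercer_kernel b \<psi>)
                        (l2_sqrt (integral_op (mercer_kernel a \<phi>)) f))))
           (coef_space \<phi> (\<lambda>i. a i * tau a b \<psi> \<phi> i)) \<and>
         coef_space \<phi> (\<lambda>i. a i * tau a b \<psi> \<phi> i) \<subseteq> coef_space \<phi> a \<and>
         is_rkhs {0..1} (mercer_kernel (\<lambda>i. a i * tau a b \<psi> \<phi> i) \<phi>)
           (coef_space \<phi> (\<lambda>i. a i * tau a b \<psi> \<phi> i))
           (coef_ip \<phi> (\<lambda>i. a i * tau a b \<psi> \<phi> i))"
proof -
  have pa: "wsp \<phi> a"
  proof (intro wsp.intro onb.intro wsp_axioms.intro)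
    show "orthonormal_basis_L2 \<phi>" by (rule phi_onb)
    show "\<And>n. 0 \<le> a n" using a_nonneg by blast
    show "summable a" by (rule a_sum)
    show "summable (\<lambda>n. a n * (\<phi> n x)^2)" if "x \<in> {0..1}" for x
      using k_def that by (simp add: power2_eq_square mult.assoc)
  qed
  have pb: "wsp \<psi> b"
  proof (intro wsp.intro onb.intro wsp_axioms.intro)
    show "orthonormal_basis_L2 \<psi>" by (rule psi_onb)
    show "\<And>n. 0 \<le> b n" using b_nonneg by blast
    show "summable b" by (rule b_sum)
    show "summable (\<lambda>n. b n * (\<psi> n x)^2)" if "x \<in> {0..1}" for x
      using c_def that by (simp add: power2_eq_square mult.assoc)
  qed
  have mm: "main \<phi> \<psi> a b" by (intro main.intro pa pb main_axioms.intro tau_bdd)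
  interpret M: main \<phi> \<psi> a b by (rule mm)
  show ?thesis
    using M.P.rkhs M.range_main M.subset wsp.rkhs[OF M.R_wsp] by blast
qed

end
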